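(* Let $B=\bigoplus_{i\in\mathbb{Z}}B_i$ be a $\mathbb{Z}$-graded noetherian normal integral domain of characteristic zero with $e(B)=1$. For each $d\in\Pi^*(B)$ such that $d$ is a unit of $B$: (a) every derivation $\delta:B^{(d)}\to B^{(d)}$ extends uniquely to a derivation $D:B\to B$; (b) every locally nilpotent derivation $\delta:B^{(d)}\to B^{(d)}$ extends uniquely to a locally nilpotent derivation $D:B\to B$.
   Context: $B^{(d)}=\bigoplus_{i\in\mathbb{Z}}B_{di}$. Derivations are not assumed homogeneous. For a $\mathbb{Z}$-graded domain $C$, $e(C)=\gcd\{i\in\mathbb{Z}:C_i\neq0\}$. $\Pi(B)$ is the set of prime numbers $p$ such that $p\mid e(B/\mathfrak{p})$ for some homogeneous prime ideal $\mathfrak{p}$ of $B$ of height $1$; $\Pi^*(B)$ is the set of positive integers $d$ not divisible by any element of $\Pi(B)$. *)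

theory Defs
  imports "HOL-Computational_Algebra.Computational_Algebra" "HOL-Library.Extended_Nat"
begin

definition is_ideal :: "'a::comm_ring_1 set \<Rightarrow> bool" where
  "is_ideal I \<longleftrightarrow> 0 \<in> I \<and> (\<forall>x\<in>I. \<forall>y\<in>I. x + y \<in> I) \<and> (\<forall>x\<in>I. - x \<in> I)
     \<and> (\<forall>r x. x \<in> I \<longrightarrow> r * x \<in> I)"

definition prime_ideal :: "'a::comm_ring_1 set \<Rightarrow> bool" where
  "prime_ideal P \<longleftrightarrow> is_ideal P \<and> P \<noteq> UNIV \<and> (\<forall>a b. a * b \<in> P \<longrightarrow> a \<in> P \<or> b \<in> P)"

definition gen_ideal :: "'a::comm_ring_1 set \<Rightarrow> 'a set" where
  "gen_ideal S = {\<Sum>s\<in>S. r s * s | r. True}"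

definition noetherian :: "'a::comm_ring_1 itself \<Rightarrow> bool" where
  "noetherian _ \<longleftrightarrow> (\<forall>I::'a set. is_ideal I \<longrightarrow> (\<exists>S. finite S \<and> S \<subseteq> I \<and> I = gen_ideal S))"

definition height :: "'a::comm_ring_1 set \<Rightarrow> enat" where
  "height P = Sup {enat n | n. \<exists>q :: nat \<Rightarrow> 'a set. (\<forall>i\<le>n. prime_ideal (q i))
        \<and> (\<forall>i<n. q i \<subset> q (Suc i)) \<and> q n = P}"

definition integral_over :: "'a::idom fract \<Rightarrow> bool" where
  "integral_over x \<longleftrightarrow> (\<exists>p :: 'a poly. lead_coeff p = 1 \<and> poly (map_poly to_fract p) x = 0)"

definition normal_domain :: "'a::idom itself \<Rightarrow> bool" where
  "normal_domain _ \<longleftrightarrow> (\<forall>x :: 'a fract. integral_over x \<longrightarrow> x \<in> range to_fract)"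

definition decomp :: "(int \<Rightarrow> 'a::comm_ring_1 set) \<Rightarrow> 'a \<Rightarrow> (int \<Rightarrow> 'a) \<Rightarrow> bool" where
  "decomp G x c \<longleftrightarrow> finite {i. c i \<noteq> 0} \<and> (\<forall>i. c i \<in> G i) \<and> x = (\<Sum>i\<in>{i. c i \<noteq> 0}. c i)"

definition Z_graded :: "(int \<Rightarrow> 'a::comm_ring_1 set) \<Rightarrow> bool" where
  "Z_graded G \<longleftrightarrow>
     (\<forall>i. 0 \<in> G i \<and> (\<forall>x\<in>G i. \<forall>y\<in>G i. x + y \<in> G i) \<and> (\<forall>x\<in>G i. - x \<in> G i))
   \<and> (\<forall>i j. \<forall>x\<in>G i. \<forall>y\<in>G j. x * y \<in> G (i + j))
   \<and> (\<forall>x. \<exists>!c. decomp G x c)"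

definition veronese :: "(int \<Rightarrow> 'a::comm_ring_1 set) \<Rightarrow> nat \<Rightarrow> 'a set" where
  "veronese G d = {x. \<exists>c. decomp G x c \<and> (\<forall>i. \<not> int d dvd i \<longrightarrow> c i = 0)}"

definition e_deg :: "(int \<Rightarrow> 'a::comm_ring_1 set) \<Rightarrow> int" where
  "e_deg G = Gcd {i. G i \<noteq> {0}}"

text \<open>For a homogeneous prime P, (B/P)_i = B_i/(P \<inter> B_i), which is nonzero iff B_i is not contained
  in P; hence e(B/P) = gcd of those i.\<close>
definition e_quot :: "(int \<Rightarrow> 'a::comm_ring_1 set) \<Rightarrow> 'a set \<Rightarrow> int" where
  "e_quot G P = Gcd {i. \<not> G i \<subseteq> P}"

definition homogeneous_ideal :: "(int \<Rightarrow> 'a::comm_ring_1 set) \<Rightarrow> 'a set \<Rightarrow> bool" where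
  "homogeneous_ideal G I \<longleftrightarrow> is_ideal I \<and> (\<forall>x\<in>I. \<forall>c. decomp G x c \<longrightarrow> (\<forall>i. c i \<in> I))"

definition Pi_set :: "(int \<Rightarrow> 'a::comm_ring_1 set) \<Rightarrow> nat set" where
  "Pi_set G = {p. prime p \<and> (\<exists>P. homogeneous_ideal G P \<and> prime_ideal P \<and> height P = 1
                                 \<and> int p dvd e_quot G P)}"

definition Pi_star :: "(int \<Rightarrow> 'a::comm_ring_1 set) \<Rightarrow> nat set" where
  "Pi_star G = {d. d > 0 \<and> (\<forall>p\<in>Pi_set G. \<not> p dvd d)}"

definition derivation_on :: "'a::comm_ring_1 set \<Rightarrow> ('a \<Rightarrow> 'a) \<Rightarrow> bool" where
  "derivation_on A \<delta> \<longleftrightarrow> (\<forall>x\<in>A. \<delta> x \<in> A)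
     \<and> (\<forall>x\<in>A. \<forall>y\<in>A. \<delta> (x + y) = \<delta> x + \<delta> y \<and> \<delta> (x * y) = x * \<delta> y + y * \<delta> x)"

definition locally_nilpotent_on :: "'a::comm_ring_1 set \<Rightarrow> ('a \<Rightarrow> 'a) \<Rightarrow> bool" where
  "locally_nilpotent_on A \<delta> \<longleftrightarrow> (\<forall>x\<in>A. \<exists>n. (\<delta> ^^ n) x = 0)"

end

theory Submission
  imports Defs
begin


locale grd =
  fixes G :: "int \<Rightarrow> 'a::{idom,ring_char_0} set"
  assumes ZG: "Z_graded G"
begin

lemma G0: "0 \<in> G i" using ZG unfolding Z_graded_def by blast
lemma Gadd: "x \<in> G i \<Longrightarrow> y \<in> G i \<Longrightarrow> x + y \<in> G i" using ZG unfolding Z_graded_def by blast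
lemma Gneg: "x \<in> G i \<Longrightarrow> - x \<in> G i" using ZG unfolding Z_graded_def by blast
lemma Gdiff: "x \<in> G i \<Longrightarrow> y \<in> G i \<Longrightarrow> x - y \<in> G i"
  using Gadd[of x i "-y"] Gneg[of y i] by simp
lemma Gmult: "x \<in> G i \<Longrightarrow> y \<in> G j \<Longrightarrow> x * y \<in> G (i + j)" using ZG unfolding Z_graded_def by blast
lemma decomp_ex1: "\<exists>!c. decomp G x c" using ZG unfolding Z_graded_def by blast

lemma Gsum: "finite F \<Longrightarrow> (\<And>k. k \<in> F \<Longrightarrow> f k \<in> G i) \<Longrightarrow> sum f F \<in> G i"
  by (induction F rule: finite_induct) (auto intro: G0 Gadd)

definition comp :: "'a \<Rightarrow> int \<Rightarrow> 'a" where "comp x = (THE c. decomp G x c)"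

lemma comp_decomp: "decomp G x (comp x)"
  unfolding comp_def using decomp_ex1[of x] by (rule theI')

lemma comp_unique: "decomp G x c \<Longrightarrow> comp x = c"
  using comp_decomp[of x] decomp_ex1[of x] by blast

lemma comp_G: "comp x i \<in> G i" using comp_decomp[of x] unfolding decomp_def by blast
lemma fin_supp: "finite {i. comp x i \<noteq> 0}" using comp_decomp[of x] unfolding decomp_def by blast

lemma decompI:
  assumes "finite F" "\<And>i. c i \<in> G i" "\<And>i. i \<notin> F \<Longrightarrow> c i = 0" "x = (\<Sum>i\<in>F. c i)"
  shows "decomp G x c"
proof -
  have sub: "{i. c i \<noteq> 0} \<subseteq> F" using assms(3) by blast
  hence fin: "finite {i. c i \<noteq> 0}" using assms(1) finite_subset by blast
  have "(\<Sum>i\<in>F. c i) = (\<Sum>i\<in>{i. c i \<noteq> 0}. c i)"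
    by (rule sum.mono_neutral_right[OF assms(1) sub]) auto
  thus ?thesis unfolding decomp_def using fin assms by auto
qed

lemma decomp_sum:
  assumes "decomp G x c" "finite F" "{i. c i \<noteq> 0} \<subseteq> F"
  shows "x = (\<Sum>i\<in>F. c i)"
proof -
  have "(\<Sum>i\<in>F. c i) = (\<Sum>i\<in>{i. c i \<noteq> 0}. c i)"
    by (rule sum.mono_neutral_right[OF assms(2) assms(3)]) auto
  thus ?thesis using assms(1) unfolding decomp_def by auto
qed

lemma comp_sum: "finite F \<Longrightarrow> {i. comp x i \<noteq> 0} \<subseteq> F \<Longrightarrow> x = (\<Sum>i\<in>F. comp x i)"
  using decomp_sum[OF comp_decomp] by blast

lemma comp_hom: "x \<in> G i \<Longrightarrow> comp x = (\<lambda>k. if k = i then x else 0)"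
  by (rule comp_unique, rule decompI[where F="{i}"]) (auto intro: G0)

lemma comp_zero: "comp 0 = (\<lambda>k. 0)"
  using comp_hom[OF G0[of 0]] by simp

lemma comp_add: "comp (x + y) = (\<lambda>k. comp x k + comp y k)"
proof (rule comp_unique, rule decompI[where F="{i. comp x i \<noteq> 0} \<union> {i. comp y i \<noteq> 0}"])
  let ?F = "{i. comp x i \<noteq> 0} \<union> {i. comp y i \<noteq> 0}"
  show "finite ?F" using fin_supp by blast
  show "\<And>i. comp x i + comp y i \<in> G i" by (auto intro: Gadd comp_G)
  show "\<And>i. i \<notin> ?F \<Longrightarrow> comp x i + comp y i = 0" by auto
  have "x = (\<Sum>i\<in>?F. comp x i)" "y = (\<Sum>i\<in>?F. comp y i)"
    using fin_supp by (auto intro!: comp_sum)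
  thus "x + y = (\<Sum>i\<in>?F. comp x i + comp y i)" by (simp add: sum.distrib)
qed

lemma comp_mult_hom:
  assumes w: "w \<in> G j"
  shows "comp (w * y) = (\<lambda>k. w * comp y (k - j))"
proof (rule comp_unique, rule decompI[where F="(\<lambda>i. i + j) ` {i. comp y i \<noteq> 0}"])
  let ?S = "{i. comp y i \<noteq> 0}"
  show "finite ((\<lambda>i. i + j) ` ?S)" using fin_supp by blast
  show "\<And>i. w * comp y (i - j) \<in> G i"
    using Gmult[OF w comp_G] by (metis add.commute diff_add_cancel)
  show "\<And>i. i \<notin> (\<lambda>i. i + j) ` ?S \<Longrightarrow> w * comp y (i - j) = 0"
  proof -
    fix i assume "i \<notin> (\<lambda>i. i + j) ` ?S"
    hence "i - j \<notin> ?S" by (metis (no_types, lifting) diff_add_cancel image_eqI)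
    thus "w * comp y (i - j) = 0" by simp
  qed
  have "(\<Sum>k\<in>(\<lambda>i. i + j) ` ?S. w * comp y (k - j)) = (\<Sum>i\<in>?S. w * comp y i)"
    by (subst sum.reindex) (auto simp: inj_on_def)
  also have "\<dots> = w * y"
  proof -
    have "y = (\<Sum>i\<in>?S. comp y i)" using comp_sum[of ?S y] fin_supp by blast
    thus ?thesis by (metis sum_distrib_left)
  qed
  finally show "w * y = (\<Sum>k\<in>(\<lambda>i. i + j) ` ?S. w * comp y (k - j))" by simp
qed

lemma one_G0: "1 \<in> G 0"
proof -
  let ?c = "comp (1::'a)"
  have "\<exists>k. ?c k \<noteq> 0"
  proof (rule ccontr)
    assume "\<not> ?thesis"
    hence "{i. ?c i \<noteq> 0} \<subseteq> {}" by auto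
    hence "(1::'a) = (\<Sum>i\<in>{}. ?c i)" using comp_sum[of "{}" 1] by blast
    thus False by simp
  qed
  then obtain k where k: "?c k \<noteq> 0" by blast
  have xk: "?c k \<in> G k" by (rule comp_G)
  have z: "?c i = 0" if "i \<noteq> 0" for i
  proof -
    have "comp (?c k * 1) (i + k) = ?c k * ?c i" using comp_mult_hom[OF xk, of 1] by simp
    moreover have "comp (?c k * 1) (i + k) = 0" using comp_hom[OF xk] that by simp
    ultimately show ?thesis using k by simp
  qed
  have "(1::'a) = (\<Sum>i\<in>{0}. ?c i)" by (rule comp_sum) (use z in auto)
  thus ?thesis using comp_G[of 1 0] by simp
qed

lemma of_nat_G0: "of_nat n \<in> G 0"
  by (induction n) (auto intro: G0 Gadd one_G0)

lemma Gpow: "x \<in> G i \<Longrightarrow> x ^ n \<in> G (int n * i)"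
proof (induction n)
  case 0 then show ?case using one_G0 by simp
next
  case (Suc n)
  have "x * x ^ n \<in> G (i + int n * i)" by (rule Gmult[OF Suc.prems Suc.IH[OF Suc.prems]])
  thus ?case by (simp add: algebra_simps)
qed

lemma comp_of_sum: "finite F \<Longrightarrow> comp (sum f F) k = (\<Sum>x\<in>F. comp (f x) k)"
  by (induction F rule: finite_induct) (auto simp: comp_zero comp_add)

lemma comp_uminus: "comp (- x) k = - comp x k"
  using comp_add[of x "-x"] comp_zero by (metis add_eq_0_iff)

lemma comp_diff: "comp (x - y) k = comp x k - comp y k"
  using comp_add[of x "-y"] comp_uminus[of y k] by simp

end


lemma ideal_0: "is_ideal I \<Longrightarrow> 0 \<in> I" unfolding is_ideal_def by blast
lemma ideal_add: "is_ideal I \<Longrightarrow> x \<in> I \<Longrightarrow> y \<in> I \<Longrightarrow> x + y \<in> I" unfolding is_ideal_def by blast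
lemma ideal_neg: "is_ideal I \<Longrightarrow> x \<in> I \<Longrightarrow> - x \<in> I" unfolding is_ideal_def by blast
lemma ideal_mult: "is_ideal I \<Longrightarrow> x \<in> I \<Longrightarrow> r * x \<in> I" unfolding is_ideal_def by blast
lemma ideal_mult2: "is_ideal I \<Longrightarrow> x \<in> I \<Longrightarrow> x * r \<in> I" using ideal_mult[of I x r] by (simp add: mult.commute)
lemma ideal_diff: "is_ideal I \<Longrightarrow> x \<in> I \<Longrightarrow> y \<in> I \<Longrightarrow> x - y \<in> I"
  using ideal_add[of I x "-y"] ideal_neg[of I y] by simp
lemma ideal_sum:
  assumes "is_ideal I" "finite S" "\<And>s. s \<in> S \<Longrightarrow> f s \<in> I"
  shows "sum f S \<in> I"
  using assms(2,3) by (induction S rule: finite_induct) (auto intro: ideal_0[OF assms(1)] ideal_add[OF assms(1)])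
lemma ideal_dvd: "is_ideal I \<Longrightarrow> x \<in> I \<Longrightarrow> x dvd y \<Longrightarrow> y \<in> I"
  by (auto elim!: dvdE intro: ideal_mult2)

lemma prime_ideal_ideal: "prime_ideal P \<Longrightarrow> is_ideal P" unfolding prime_ideal_def by blast
lemma prime_ideal_mult: "prime_ideal P \<Longrightarrow> a * b \<in> P \<Longrightarrow> a \<in> P \<or> b \<in> P" unfolding prime_ideal_def by blast
lemma prime_ideal_one: "prime_ideal P \<Longrightarrow> (1::'a::comm_ring_1) \<notin> P"
proof
  assume "prime_ideal P" "1 \<in> P"
  hence "x \<in> P" for x using ideal_mult[of P 1 x] unfolding prime_ideal_def by auto
  thus False using \<open>prime_ideal P\<close> unfolding prime_ideal_def by auto
qed
lemma prime_ideal_pow: "prime_ideal P \<Longrightarrow> a ^ n \<in> P \<Longrightarrow> a \<in> P"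
proof (induction n)
  case 0 then show ?case using prime_ideal_one by auto
next
  case (Suc n) then show ?case using prime_ideal_mult[of P a "a^n"] by auto
qed

lemma zero_prime: "prime_ideal {0::'a::idom}"
proof -
  have "{0::'a} \<noteq> UNIV" by (metis UNIV_I singletonD zero_neq_one)
  thus ?thesis unfolding prime_ideal_def is_ideal_def by auto
qed

lemma gen_ideal_sub:
  assumes "is_ideal I" "S \<subseteq> I" "finite S"
  shows "gen_ideal S \<subseteq> I"
proof
  fix x assume "x \<in> gen_ideal S"
  then obtain r where "x = (\<Sum>s\<in>S. r s * s)" unfolding gen_ideal_def by blast
  thus "x \<in> I" using assms by (auto intro!: ideal_sum ideal_mult)
qed

lemma noeth_acc:
  fixes I :: "nat \<Rightarrow> 'a::comm_ring_1 set"
  assumes noeth: "noetherian TYPE('a)" and id: "\<And>n. is_ideal (I n)" and inc: "\<And>n. I n \<subseteq> I (Suc n)"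
  shows "\<exists>N. \<forall>m\<ge>N. I m = I N"
proof -
  have mono: "I n \<subseteq> I m" if nm: "n \<le> m" for n m
    by (rule lift_Suc_mono_le[of I, OF inc nm])
  define U where "U = (\<Union>n. I n)"
  have U: "is_ideal U"
    unfolding is_ideal_def
  proof (intro conjI ballI allI impI)
    show "0 \<in> U" using ideal_0[OF id[of 0]] unfolding U_def by blast
  next
    fix x y assume xyU: "x \<in> U" "y \<in> U"
    obtain n where n: "x \<in> I n" using xyU(1) unfolding U_def by blast
    obtain m where m: "y \<in> I m" using xyU(2) unfolding U_def by blast
    have "x \<in> I (max n m)" using mono[of n "max n m"] n by auto
    moreover have "y \<in> I (max n m)" using mono[of m "max n m"] m by auto
    ultimately have "x + y \<in> I (max n m)" by (rule ideal_add[OF id])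
    thus "x + y \<in> U" unfolding U_def by blast
  next
    fix x assume "x \<in> U"
    then obtain n where n: "x \<in> I n" unfolding U_def by blast
    show "- x \<in> U" using ideal_neg[OF id n] unfolding U_def by blast
  next
    fix r x assume "x \<in> U"
    then obtain n where n: "x \<in> I n" unfolding U_def by blast
    show "r * x \<in> U" using ideal_mult[OF id n] unfolding U_def by blast
  qed
  have nd: "\<forall>I::'a set. is_ideal I \<longrightarrow> (\<exists>S. finite S \<and> S \<subseteq> I \<and> I = gen_ideal S)"
    using noeth by (simp only: noetherian_def)
  have "\<exists>S. finite S \<and> S \<subseteq> U \<and> U = gen_ideal S"
    using nd[rule_format, OF U] .
  then obtain S where S: "finite S" "S \<subseteq> U" "U = gen_ideal S" by blast
  have fin: "\<exists>N. S' \<subseteq> I N" if fS: "finite S'" "S' \<subseteq> U" for S'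
    using fS
  proof (induction S' rule: finite_induct)
    case empty then show ?case by blast
  next
    case (insert s S')
    then obtain N where N: "S' \<subseteq> I N" by blast
    obtain n where n: "s \<in> I n" using insert.prems unfolding U_def by blast
    have "S' \<subseteq> I (max N n)" using mono[of N "max N n"] N by auto
    moreover have "s \<in> I (max N n)" using mono[of n "max N n"] n by auto
    ultimately have "insert s S' \<subseteq> I (max N n)" by blast
    thus ?case by blast
  qed
  obtain N where N: "S \<subseteq> I N" using fin[OF S(1) S(2)] by blast
  have UN: "U \<subseteq> I N" using S(3) gen_ideal_sub[OF id N S(1)] by simp
  have "I m = I N" if "m \<ge> N" for m
  proof
    show "I N \<subseteq> I m" by (rule mono[OF that])
    have "I m \<subseteq> U" unfolding U_def by blast
    thus "I m \<subseteq> I N" using UN by blast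
  qed
  thus ?thesis by blast
qed

lemma noeth_max:
  fixes F :: "'a::comm_ring_1 set set"
  assumes noeth: "noetherian TYPE('a)" and ne: "F \<noteq> {}" and id: "\<And>I. I \<in> F \<Longrightarrow> is_ideal I"
  shows "\<exists>M\<in>F. \<forall>J\<in>F. M \<subseteq> J \<longrightarrow> J = M"
proof (rule ccontr)
  assume nt: "\<not> (\<exists>M\<in>F. \<forall>J\<in>F. M \<subseteq> J \<longrightarrow> J = M)"
  have ex: "\<exists>J. J \<in> F \<and> M \<subset> J" if MF: "M \<in> F" for M
  proof -
    have "\<not> (\<forall>J\<in>F. M \<subseteq> J \<longrightarrow> J = M)" using nt MF by simp
    then obtain J where "J \<in> F" "M \<subseteq> J" "J \<noteq> M" by auto
    hence "J \<in> F \<and> M \<subset> J" by auto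
    thus ?thesis by (rule exI)
  qed
  define f where "f M = (SOME J. J \<in> F \<and> M \<subset> J)" for M
  have f: "f M \<in> F \<and> M \<subset> f M" if MF: "M \<in> F" for M
    unfolding f_def by (rule someI_ex[OF ex[OF MF]])
  obtain I0 where I0: "I0 \<in> F" using ne by auto
  define s where "s n = (f ^^ n) I0" for n
  have sF: "s n \<in> F" for n
  proof (induction n)
    case 0 then show ?case by (simp add: s_def I0)
  next
    case (Suc n)
    have "s (Suc n) = f (s n)" by (simp add: s_def)
    thus ?case using f[OF Suc] by simp
  qed
  have sinc: "s n \<subset> s (Suc n)" for n
  proof -
    have "s (Suc n) = f (s n)" by (simp add: s_def)
    thus ?thesis using f[OF sF[of n]] by simp
  qed
  have sid: "is_ideal (s n)" for n by (rule id[OF sF])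
  have sinc2: "s n \<subseteq> s (Suc n)" for n using sinc[of n] by (rule psubset_imp_subset)
  obtain N where N: "\<forall>m\<ge>N. s m = s N"
    using noeth_acc[of s, OF noeth sid sinc2] by auto
  have "s (Suc N) = s N" by (rule N[rule_format]) simp
  thus False using sinc[of N] by simp
qed



lemma semigroup_residues:
  fixes S :: "int set" and d :: nat
  assumes S0: "0 \<in> S" and Sadd: "\<And>a b. a \<in> S \<Longrightarrow> b \<in> S \<Longrightarrow> a + b \<in> S"
    and cop: "coprime (Gcd S) (int d)" and d: "d > 0"
  shows "\<exists>s\<in>S. int d dvd (s - r)"
proof -
  define H where "H = {h. \<exists>s\<in>S. int d dvd (s - h)}"
  have Smul: "int n * s \<in> S" if "s \<in> S" for n s
    by (induction n) (auto simp: S0 distrib_right intro: Sadd that)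
  have H0: "0 \<in> H" unfolding H_def using S0 by auto
  have Hadd: "a + b \<in> H" if abH: "a \<in> H" "b \<in> H" for a b
  proof -
    obtain s t where st: "s \<in> S" "int d dvd (s - a)" "t \<in> S" "int d dvd (t - b)" using abH unfolding H_def by blast
    have "int d dvd ((s - a) + (t - b))" using st by simp
    hence "int d dvd ((s + t) - (a + b))" by (simp add: algebra_simps)
    thus ?thesis unfolding H_def using Sadd[OF st(1) st(3)] by blast
  qed
  have Hneg: "- a \<in> H" if aH: "a \<in> H" for a
  proof -
    obtain s where s: "s \<in> S" "int d dvd (s - a)" using aH unfolding H_def by blast
    have "int (d - 1) * s \<in> S" using Smul s(1) by blast
    moreover have "int d dvd (int (d - 1) * s - (- a))"
    proof -
      have "int (d - 1) * s - (- a) = int d * s - (s - a)" using d by (simp add: of_nat_diff algebra_simps)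
      moreover have "int d dvd (int d * s - (s - a))" using s(2) by simp
      ultimately show ?thesis by (simp only:)
    qed
    ultimately show ?thesis unfolding H_def by blast
  qed
  have Hdiff: "a - b \<in> H" if "a \<in> H" "b \<in> H" for a b
    using Hadd[OF that(1) Hneg[OF that(2)]] by simp
  have TH: "insert (int d) S \<subseteq> H"
  proof
    fix x assume "x \<in> insert (int d) S"
    thus "x \<in> H"
    proof
      assume "x = int d" thus ?thesis unfolding H_def using S0 by (auto intro!: bexI[of _ 0])
    next
      assume "x \<in> S" thus ?thesis unfolding H_def by force
    qed
  qed
  have gcH: "group_closure (insert (int d) S) \<subseteq> H"
  proof
    fix x assume "x \<in> group_closure (insert (int d) S)"
    thus "x \<in> H"
      by (induction rule: group_closure.induct) (use TH H0 Hdiff in auto)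
  qed
  have "Gcd (insert (int d) S) = 1" using cop by (simp add: Gcd_insert coprime_iff_gcd_eq_1 gcd.commute)
  hence "1 \<in> H" using Gcd_in_group_closure[of "insert (int d) S"] gcH by auto
  then obtain s where s: "s \<in> S" "int d dvd (s - 1)" unfolding H_def by blast
  define n where "n = nat (r mod int d)"
  have nr: "int n = r mod int d" unfolding n_def using d by simp
  have "int n * s \<in> S" using Smul s(1) by blast
  moreover have "int d dvd (int n * s - r)"
  proof -
    have "int n * s - r = int n * (s - 1) - (r - r mod int d)" using nr by (simp add: algebra_simps)
    also have "r - r mod int d = int d * (r div int d)" by (simp add: minus_mod_eq_mult_div)
    finally have e: "int n * s - r = int n * (s - 1) - int d * (r div int d)" .
    show ?thesis unfolding e using s(2) by simp
  qed
  ultimately show ?thesis by blast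
qed

context grd
begin

definition below :: "int \<Rightarrow> 'a \<Rightarrow> bool" where "below K y \<longleftrightarrow> (\<forall>k\<ge>K. comp y k = 0)"

lemma below_0: "below K 0" by (simp add: below_def comp_zero)
lemma below_add: "below K x \<Longrightarrow> below K y \<Longrightarrow> below K (x + y)" by (simp add: below_def comp_add)
lemma below_mono: "below K y \<Longrightarrow> K \<le> K' \<Longrightarrow> below K' y" by (simp add: below_def)
lemma below_hom_mult: "w \<in> G j \<Longrightarrow> below K y \<Longrightarrow> below (K + j) (w * y)"
  by (simp add: below_def comp_mult_hom)
lemma below_sum: "finite F \<Longrightarrow> (\<And>x. x \<in> F \<Longrightarrow> below K (f x)) \<Longrightarrow> below K (sum f F)"
  by (induction F rule: finite_induct) (auto intro: below_0 below_add)

lemma below_mult: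
  assumes y: "below K y" and z: "below K' z"
  shows "below (K + K' - 1) (y * z)"
proof -
  let ?S = "{i. comp y i \<noteq> 0}"
  have "y = (\<Sum>i\<in>?S. comp y i)" using comp_sum fin_supp by blast
  hence "y * z = (\<Sum>i\<in>?S. comp y i * z)" by (metis sum_distrib_right)
  moreover have "below (K + K' - 1) (comp y i * z)" if iS: "i \<in> ?S" for i
  proof -
    have "i < K"
    proof (rule ccontr)
      assume "\<not> i < K"
      hence "comp y i = 0" using y unfolding below_def by simp
      thus False using iS by simp
    qed
    have "below (K' + i) (comp y i * z)" using below_hom_mult[OF comp_G z] .
    thus ?thesis by (rule below_mono) (use \<open>i < K\<close> in simp)
  qed
  ultimately show ?thesis using fin_supp by (auto intro!: below_sum)
qed

lemma top_split:
  assumes "x \<noteq> 0"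
  shows "\<exists>m. comp x m \<noteq> 0 \<and> below m (x - comp x m)"
proof -
  let ?S = "{i. comp x i \<noteq> 0}"
  have ne: "?S \<noteq> {}"
  proof
    assume "?S = {}"
    hence "x = (\<Sum>i\<in>{}. comp x i)" using comp_sum[of "{}" x] by simp
    thus False using assms by simp
  qed
  define m where "m = Max ?S"
  have mS: "m \<in> ?S" unfolding m_def using fin_supp ne by (rule Max_in)
  have "below m (x - comp x m)" unfolding below_def
  proof (intro allI impI)
    fix k assume "m \<le> k"
    show "comp (x - comp x m) k = 0"
    proof (cases "k = m")
      case True
      thus ?thesis using comp_hom[OF comp_G[of x m]] by (simp add: comp_diff)
    next
      case False
      hence "k > m" using \<open>m \<le> k\<close> by simp
      hence "comp x k = 0" using Max_ge[OF fin_supp, of k x] unfolding m_def by force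
      thus ?thesis using comp_hom[OF comp_G[of x m]] False by (simp add: comp_diff)
    qed
  qed
  thus ?thesis using mS by blast
qed

lemma hom_prime:
  assumes id: "is_ideal P" and nU: "P \<noteq> UNIV"
    and hom: "\<And>x k. x \<in> P \<Longrightarrow> comp x k \<in> P"
    and hp: "\<And>a b i j. a \<in> G i \<Longrightarrow> b \<in> G j \<Longrightarrow> a * b \<in> P \<Longrightarrow> a \<in> P \<or> b \<in> P"
  shows "prime_ideal P"
proof -
  have reduce: "\<exists>a'. a - a' \<in> P \<and> (\<forall>k. comp a' k \<in> P \<longrightarrow> comp a' k = 0)" for a
  proof -
    let ?S = "{i. comp a i \<noteq> 0}"
    let ?T = "{i. comp a i \<notin> P}"
    have TS: "?T \<subseteq> ?S" using ideal_0[OF id] by auto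
    have fT: "finite ?T" using finite_subset[OF TS fin_supp] .
    define a' where "a' = (\<Sum>i\<in>?T. comp a i)"
    have ca': "comp a' k = (if k \<in> ?T then comp a k else 0)" for k
    proof -
      have "comp a' k = (\<Sum>i\<in>?T. comp (comp a i) k)" unfolding a'_def by (rule comp_of_sum[OF fT])
      also have "\<dots> = (\<Sum>i\<in>?T. if k = i then comp a i else 0)"
        by (rule sum.cong) (auto simp: comp_hom[OF comp_G])
      also have "\<dots> = (if k \<in> ?T then comp a k else 0)" using fT by (simp add: sum.delta)
      finally show ?thesis .
    qed
    have "a = (\<Sum>i\<in>?S. comp a i)" using comp_sum fin_supp by blast
    also have "\<dots> = a' + (\<Sum>i\<in>?S - ?T. comp a i)"
      unfolding a'_def using sum.subset_diff[OF TS fin_supp] by (simp add: add.commute)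
    finally have "a - a' = (\<Sum>i\<in>?S - ?T. comp a i)" by (simp add: algebra_simps)
    moreover have "(\<Sum>i\<in>?S - ?T. comp a i) \<in> P" by (rule ideal_sum[OF id]) (use fin_supp in auto)
    ultimately have "a - a' \<in> P" by simp
    moreover have "\<forall>k. comp a' k \<in> P \<longrightarrow> comp a' k = 0" using ca' by auto
    ultimately show ?thesis by blast
  qed
  have "a \<in> P \<or> b \<in> P" if ab: "a * b \<in> P" for a b
  proof (rule ccontr)
    assume nab: "\<not> (a \<in> P \<or> b \<in> P)"
    obtain a' where a': "a - a' \<in> P" "\<forall>k. comp a' k \<in> P \<longrightarrow> comp a' k = 0" using reduce by blast
    obtain b' where b': "b - b' \<in> P" "\<forall>k. comp b' k \<in> P \<longrightarrow> comp b' k = 0" using reduce by blast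
    have a'P: "a' \<notin> P" using nab a'(1) ideal_add[OF id, of "a - a'" a'] by auto
    have b'P: "b' \<notin> P" using nab b'(1) ideal_add[OF id, of "b - b'" b'] by auto
    have "a' * b' = a * b - (a - a') * b - a' * (b - b')" by (simp add: algebra_simps)
    moreover have "a * b - (a - a') * b - a' * (b - b') \<in> P"
      by (intro ideal_diff[OF id] ab ideal_mult2[OF id] ideal_mult[OF id] a'(1) b'(1))
    ultimately have abP: "a' * b' \<in> P" by simp
    have "a' \<noteq> 0" using a'P ideal_0[OF id] by auto
    then obtain m where m: "comp a' m \<noteq> 0" "below m (a' - comp a' m)" using top_split by blast
    have "b' \<noteq> 0" using b'P ideal_0[OF id] by auto
    then obtain n where n: "comp b' n \<noteq> 0" "below n (b' - comp b' n)" using top_split by blast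
    define am where "am = comp a' m"
    define bn where "bn = comp b' n"
    define ar where "ar = a' - am"
    define br where "br = b' - bn"
    have amG: "am \<in> G m" unfolding am_def by (rule comp_G)
    have bnG: "bn \<in> G n" unfolding bn_def by (rule comp_G)
    have "a' * b' = am * bn + (am * br + (ar * bn + ar * br))"
      unfolding ar_def br_def by (simp add: algebra_simps)
    moreover have "below (m + n) (am * br + (ar * bn + ar * br))"
    proof (intro below_add)
      show "below (m + n) (am * br)"
        using below_hom_mult[OF amG n(2)[folded bn_def br_def]] by (simp add: add.commute)
      show "below (m + n) (ar * bn)"
        using below_hom_mult[OF bnG m(2)[folded am_def ar_def]] by (simp add: mult.commute)
      show "below (m + n) (ar * br)"
        using below_mult[OF m(2)[folded am_def ar_def] n(2)[folded bn_def br_def]] by (rule below_mono) simp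
    qed
    ultimately have "comp (a' * b') (m + n) = comp (am * bn) (m + n)"
      by (simp add: comp_add below_def)
    also have "\<dots> = am * bn" using comp_hom[OF Gmult[OF amG bnG]] by simp
    finally have "am * bn \<in> P" using hom[OF abP, of "m + n"] by simp
    hence "am \<in> P \<or> bn \<in> P" using hp[OF amG bnG] by blast
    thus False using a'(2) b'(2) m(1) n(1) unfolding am_def bn_def by blast
  qed
  thus ?thesis unfolding prime_ideal_def using id nU by blast
qed

definition Mr :: "nat \<Rightarrow> int \<Rightarrow> 'a set" where
  "Mr d r = {b. \<forall>k. comp b k \<noteq> 0 \<longrightarrow> int d dvd (k - r)}"

lemma Mr_cong: "int d dvd (r - s) \<Longrightarrow> Mr d r = Mr d s"
proof -
  assume h: "int d dvd (r - s)"
  have "int d dvd (k - r) \<longleftrightarrow> int d dvd (k - s)" for k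
  proof -
    have "k - s = (k - r) + (r - s)" "k - r = (k - s) - (r - s)" by simp_all
    thus ?thesis using h by (metis dvd_add dvd_diff)
  qed
  thus ?thesis unfolding Mr_def by simp
qed

lemma Mr_hom: "x \<in> G k \<Longrightarrow> x \<in> Mr d k"
  unfolding Mr_def by (simp add: comp_hom)

lemma Mr_0: "0 \<in> Mr d r" unfolding Mr_def by (simp add: comp_zero)

lemma Mr_add:
  assumes "x \<in> Mr d r" "y \<in> Mr d r" shows "x + y \<in> Mr d r"
  unfolding Mr_def
proof (intro CollectI allI impI)
  fix k assume "comp (x + y) k \<noteq> 0"
  hence "comp x k \<noteq> 0 \<or> comp y k \<noteq> 0" by (auto simp: comp_add)
  thus "int d dvd (k - r)" using assms unfolding Mr_def by blast
qed

lemma Mr_sum: "finite F \<Longrightarrow> (\<And>i. i \<in> F \<Longrightarrow> f i \<in> Mr d r) \<Longrightarrow> sum f F \<in> Mr d r"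
  by (induction F rule: finite_induct) (auto intro: Mr_0 Mr_add)

lemma Mr_comp: "x \<in> Mr d r \<Longrightarrow> comp x k \<in> Mr d r"
proof -
  assume x: "x \<in> Mr d r"
  show ?thesis
  proof (cases "comp x k = 0")
    case True thus ?thesis using Mr_0 by simp
  next
    case False
    hence "int d dvd (k - r)" using x unfolding Mr_def by blast
    thus ?thesis using Mr_hom[OF comp_G, of x k d] Mr_cong by blast
  qed
qed

lemma Mr_decomp: "x = (\<Sum>i\<in>{i. comp x i \<noteq> 0}. comp x i)"
  using comp_sum fin_supp by blast

lemma Mr_mult:
  assumes x: "x \<in> Mr d r" and y: "y \<in> Mr d s"
  shows "x * y \<in> Mr d (r + s)"
proof -
  let ?S = "{i. comp x i \<noteq> 0}" and ?T = "{i. comp y i \<noteq> 0}"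
  have "x * y = (\<Sum>i\<in>?S. comp x i) * (\<Sum>j\<in>?T. comp y j)" using Mr_decomp[of x] Mr_decomp[of y] by simp
  also have "\<dots> = (\<Sum>i\<in>?S. \<Sum>j\<in>?T. comp x i * comp y j)" by (simp add: sum_product)
  finally have xy: "x * y = (\<Sum>i\<in>?S. \<Sum>j\<in>?T. comp x i * comp y j)" .
  have "(\<Sum>i\<in>?S. \<Sum>j\<in>?T. comp x i * comp y j) \<in> Mr d (r + s)"
  proof (intro Mr_sum fin_supp)
    fix i j assume i: "i \<in> ?S" and j: "j \<in> ?T"
    have "int d dvd (i - r)" using i x unfolding Mr_def by blast
    moreover have "int d dvd (j - s)" using j y unfolding Mr_def by blast
    ultimately have "int d dvd ((i - r) + (j - s))" by (rule dvd_add)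
    hence "int d dvd (i + j - (r + s))" by (simp add: algebra_simps)
    thus "comp x i * comp y j \<in> Mr d (r + s)"
      using Mr_hom[OF Gmult[OF comp_G comp_G], of x i y j d] Mr_cong by blast
  qed
  thus ?thesis using xy by simp
qed

lemma Mr_one: "1 \<in> Mr d 0" using Mr_hom[OF one_G0] .

lemma Mr_pow: "x \<in> Mr d r \<Longrightarrow> x ^ n \<in> Mr d (int n * r)"
proof (induction n)
  case 0 then show ?case using Mr_one by simp
next
  case (Suc n)
  have "x * x ^ n \<in> Mr d (r + int n * r)" by (rule Mr_mult[OF Suc.prems Suc.IH[OF Suc.prems]])
  thus ?case by (simp add: algebra_simps)
qed

lemma Mr_shift:
  assumes w: "w \<in> G j" "w \<noteq> 0" and wy: "w * y \<in> Mr d s"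
  shows "y \<in> Mr d (s - j)"
  unfolding Mr_def
proof (intro CollectI allI impI)
  fix k assume "comp y k \<noteq> 0"
  hence "comp (w * y) (k + j) \<noteq> 0" using comp_mult_hom[OF w(1)] w(2) by simp
  hence "int d dvd (k + j - s)" using wy unfolding Mr_def by blast
  thus "int d dvd (k - (s - j))" by (simp add: algebra_simps)
qed

lemma ver_Mr: "veronese G d = Mr d 0"
proof
  show "veronese G d \<subseteq> Mr d 0"
  proof
    fix x assume "x \<in> veronese G d"
    then obtain c where c: "decomp G x c" "\<forall>i. \<not> int d dvd i \<longrightarrow> c i = 0" unfolding veronese_def by blast
    have "comp x = c" using comp_unique[OF c(1)] .
    thus "x \<in> Mr d 0" unfolding Mr_def using c(2) by auto
  qed
  show "Mr d 0 \<subseteq> veronese G d"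
  proof
    fix x assume "x \<in> Mr d 0"
    hence "\<forall>i. \<not> int d dvd i \<longrightarrow> comp x i = 0" unfolding Mr_def by auto
    thus "x \<in> veronese G d" unfolding veronese_def using comp_decomp by blast
  qed
qed

end


lemma height_one:
  fixes p :: "'a::idom set"
  assumes pp: "prime_ideal p" and nz: "p \<noteq> {0}"
    and below: "\<And>q. prime_ideal q \<Longrightarrow> q \<subset> p \<Longrightarrow> q = {0}"
  shows "height p = 1"
proof -
  define S where "S = {enat n | n. \<exists>q :: nat \<Rightarrow> 'a set. (\<forall>i\<le>n. prime_ideal (q i))
        \<and> (\<forall>i<n. q i \<subset> q (Suc i)) \<and> q n = p}"
  have le: "x \<le> 1" if xS: "x \<in> S" for x
  proof -
    obtain n q where x: "x = enat n" and qp1: "\<forall>i\<le>n. prime_ideal (q i)"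
      and qp2: "\<forall>i<n. q i \<subset> q (Suc i)" and qp3: "q n = p"
      using xS unfolding S_def by blast
    show ?thesis
    proof (rule ccontr)
      assume "\<not> x \<le> 1"
      hence "n \<ge> 2" using x by (simp add: one_enat_def)
      then obtain k where n: "n = Suc (Suc k)" by (metis add_2_eq_Suc le_Suc_ex)
      have "q (Suc k) \<subset> p" using qp2 qp3 n by auto
      moreover have "prime_ideal (q (Suc k))" using qp1 n by auto
      ultimately have q1: "q (Suc k) = {0}" using below by blast
      have "q k \<subset> q (Suc k)" using qp2 n by auto
      moreover have "0 \<in> q k"
      proof -
        have "prime_ideal (q k)" using qp1 n by simp
        thus ?thesis using prime_ideal_ideal ideal_0 by blast
      qed
      ultimately show False using q1 by auto
    qed
  qed
  have one: "1 \<in> S"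
  proof -
    define q where "q = (\<lambda>i::nat. if i = 0 then {0::'a} else p)"
    have "0 \<in> p" using pp prime_ideal_ideal ideal_0 by blast
    hence "{0} \<subset> p" using nz by auto
    hence "(\<forall>i\<le>1. prime_ideal (q i)) \<and> (\<forall>i<1. q i \<subset> q (Suc i)) \<and> q 1 = p"
      using pp zero_prime unfolding q_def by (auto simp: le_Suc_eq)
    hence "enat 1 \<in> S" unfolding S_def by blast
    thus ?thesis by (simp add: one_enat_def)
  qed
  have "Sup S = 1"
  proof (rule antisym)
    show "Sup S \<le> 1" using le by (simp add: Sup_le_iff)
    show "1 \<le> Sup S" using one by (rule Sup_upper)
  qed
  thus ?thesis unfolding height_def S_def by simp
qed

lemma fract_poly_sum: "fract_poly (sum f A) = (\<Sum>x\<in>A. fract_poly (f x))"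
  by (induction A rule: infinite_finite_induct) simp_all

lemma ann_height1:
  fixes g c :: "'a::idom"
  assumes noeth: "noetherian TYPE('a)" and nd: "normal_domain TYPE('a)"
    and g: "g \<noteq> 0" and c: "\<not> g dvd c" and pr: "prime_ideal {r. g dvd r * c}"
  shows "height {r. g dvd r * c} = 1"
proof -
  define p where "p = {r. g dvd r * c}"
  have pp: "prime_ideal p" using pr p_def by simp
  have gp: "g \<in> p" unfolding p_def by simp
  have pid: "is_ideal p" using pp prime_ideal_ideal by blast
  show ?thesis
  proof (cases "\<forall>s\<in>p. \<exists>s'\<in>p. s * c = g * s'")
    case True
    define u where "u = to_fract c / to_fract g"
    have tg: "to_fract g \<noteq> 0" using g by simp
    have mul: "\<forall>s\<in>p. \<exists>s'\<in>p. to_fract s * u ^ n = to_fract s'" for n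
    proof (induction n)
      case 0 show ?case by auto
    next
      case (Suc n)
      show ?case
      proof
        fix s assume sp: "s \<in> p"
        obtain s1 where s1: "s1 \<in> p" "to_fract s * u ^ n = to_fract s1" using Suc sp by blast
        obtain s2 where s2: "s2 \<in> p" "s1 * c = g * s2" using True s1(1) by blast
        have "to_fract s * u ^ Suc n = to_fract s1 * u" using s1(2) by (simp add: mult.assoc mult.commute)
        also have "\<dots> = to_fract (s1 * c) / to_fract g" unfolding u_def by simp
        also have "\<dots> = to_fract s2" using s2(2) tg by simp
        finally show "\<exists>s'\<in>p. to_fract s * u ^ Suc n = to_fract s'" using s2(1) by blast
      qed
    qed
    have gu: "\<exists>b. to_fract g * u ^ n = to_fract b" for n using mul[of n] gp by blast
    define I where "I n = {b. \<exists>r. to_fract b = (\<Sum>k\<le>n. to_fract (r k) * (to_fract g * u ^ k))}" for n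
    have Iid: "is_ideal (I n)" for n
      unfolding is_ideal_def
    proof (intro conjI ballI allI impI)
      show "0 \<in> I n" unfolding I_def by (rule CollectI, rule exI[of _ "\<lambda>_. 0"]) simp
    next
      fix x y assume "x \<in> I n" "y \<in> I n"
      then obtain r r' where r: "to_fract x = (\<Sum>k\<le>n. to_fract (r k) * (to_fract g * u ^ k))"
        and r': "to_fract y = (\<Sum>k\<le>n. to_fract (r' k) * (to_fract g * u ^ k))" unfolding I_def by blast
      have h: "to_fract (x + y) = (\<Sum>k\<le>n. to_fract (r k + r' k) * (to_fract g * u ^ k))"
        using r r' by (simp add: sum.distrib distrib_right)
      have "\<exists>r. to_fract (x + y) = (\<Sum>k\<le>n. to_fract (r k) * (to_fract g * u ^ k))"
        by (rule exI[where x="\<lambda>k. r k + r' k"]) (use h in simp)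
      thus "x + y \<in> I n" unfolding I_def by blast
    next
      fix x assume "x \<in> I n"
      then obtain r where r: "to_fract x = (\<Sum>k\<le>n. to_fract (r k) * (to_fract g * u ^ k))" unfolding I_def by blast
      have h: "to_fract (- x) = (\<Sum>k\<le>n. to_fract (- r k) * (to_fract g * u ^ k))"
        using r by (simp add: sum_negf)
      have "\<exists>r. to_fract (- x) = (\<Sum>k\<le>n. to_fract (r k) * (to_fract g * u ^ k))"
        by (rule exI[where x="\<lambda>k. - r k"]) (use h in simp)
      thus "- x \<in> I n" unfolding I_def by blast
    next
      fix a x assume "x \<in> I n"
      then obtain r where r: "to_fract x = (\<Sum>k\<le>n. to_fract (r k) * (to_fract g * u ^ k))" unfolding I_def by blast
      have h: "to_fract (a * x) = (\<Sum>k\<le>n. to_fract (a * r k) * (to_fract g * u ^ k))"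
        using r by (simp add: sum_distrib_left mult.assoc)
      have "\<exists>r. to_fract (a * x) = (\<Sum>k\<le>n. to_fract (r k) * (to_fract g * u ^ k))"
        by (rule exI[where x="\<lambda>k. a * r k"]) (use h in simp)
      thus "a * x \<in> I n" unfolding I_def by blast
    qed
    have Iinc: "I n \<subseteq> I (Suc n)" for n
    proof
      fix x assume "x \<in> I n"
      then obtain r where r: "to_fract x = (\<Sum>k\<le>n. to_fract (r k) * (to_fract g * u ^ k))" unfolding I_def by blast
      define r' where "r' k = (if k \<le> n then r k else 0)" for k
      have "(\<Sum>k\<le>Suc n. to_fract (r' k) * (to_fract g * u ^ k)) = (\<Sum>k\<le>n. to_fract (r k) * (to_fract g * u ^ k))"
        by (simp add: r'_def)
      thus "x \<in> I (Suc n)" using r unfolding I_def by (metis (mono_tags, lifting) mem_Collect_eq)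
    qed
    obtain N where N: "\<forall>m\<ge>N. I m = I N" using noeth_acc[of I, OF noeth Iid Iinc] by blast
    obtain b where b: "to_fract g * u ^ Suc N = to_fract b" using gu by blast
    have "b \<in> I (Suc N)"
    proof -
      define r where "r k = (if k = Suc N then (1::'a) else 0)" for k
      have "(\<Sum>k\<le>Suc N. to_fract (r k) * (to_fract g * u ^ k)) = to_fract g * u ^ Suc N"
        by (simp add: r_def)
      thus ?thesis using b unfolding I_def by (metis (mono_tags, lifting) mem_Collect_eq)
    qed
    moreover have "I (Suc N) = I N" by (rule N[rule_format]) simp
    ultimately have "b \<in> I N" by simp
    then obtain r where r: "to_fract b = (\<Sum>k\<le>N. to_fract (r k) * (to_fract g * u ^ k))" unfolding I_def by blast
    have "to_fract g * u ^ Suc N = to_fract g * (\<Sum>k\<le>N. to_fract (r k) * u ^ k)"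
      using b r by (simp add: sum_distrib_left mult.assoc mult.left_commute)
    hence ueq: "u ^ Suc N = (\<Sum>k\<le>N. to_fract (r k) * u ^ k)" using tg by simp
    define Q where "Q = (\<Sum>k\<le>N. monom (r k) k)"
    define P where "P = - Q + monom 1 (Suc N)"
    have dQ: "degree Q < Suc N" unfolding Q_def
      by (rule degree_sum_less) (auto simp: degree_monom_le le_imp_less_Suc intro: le_less_trans[OF degree_monom_le])
    have lc: "lead_coeff P = 1" unfolding P_def
      by (subst lead_coeff_add_le) (use dQ in \<open>simp_all add: degree_monom_eq\<close>)
    have "poly (map_poly to_fract P) u = u ^ Suc N - (\<Sum>k\<le>N. to_fract (r k) * u ^ k)"
      unfolding P_def Q_def by (simp add: fract_poly_sum map_poly_monom poly_sum poly_monom)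
    hence "poly (map_poly to_fract P) u = 0" using ueq by simp
    hence "integral_over u" unfolding integral_over_def using lc by blast
    hence "u \<in> range to_fract" using nd unfolding normal_domain_def by blast
    then obtain b' where b': "u = to_fract b'" by blast
    have "to_fract c = to_fract (g * b')" using b' tg unfolding u_def by (simp add: field_simps)
    hence "c = g * b'" by (simp only: to_fract_eq_iff)
    thus ?thesis using c by simp
  next
    case False
    then obtain t where tp: "t \<in> p" and nt: "\<forall>s'\<in>p. t * c \<noteq> g * s'" by blast
    from tp obtain w where w: "t * c = g * w" unfolding p_def by (auto elim: dvdE)
    have wp: "w \<notin> p" using nt w by auto
    have key: "t dvd w * s" if sp: "s \<in> p" for s
    proof -
      have "g dvd s * c" using sp unfolding p_def by simp
      then obtain s1 where s1: "s * c = g * s1" by (elim dvdE)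
      have "g * (w * s) = (t * c) * s" using w by simp
      also have "\<dots> = t * (s * c)" by (simp add: ac_simps)
      also have "\<dots> = g * (t * s1)" using s1 by (simp add: ac_simps)
      finally have "w * s = t * s1" using g by simp
      thus ?thesis by simp
    qed
    have w0: "w \<noteq> 0" using wp ideal_0[OF pid] by blast
    have below: "q = {0}" if qp: "prime_ideal q" and qsub: "q \<subset> p" for q
    proof (rule ccontr)
      assume qn: "q \<noteq> {0}"
      have qid: "is_ideal q" using qp prime_ideal_ideal by blast
      have wq: "w \<notin> q" using wp qsub by blast
      have tq: "t \<notin> q"
      proof
        assume tq: "t \<in> q"
        have "p \<subseteq> q"
        proof
          fix s assume sp: "s \<in> p"
          have "w * s \<in> q" using key[OF sp] ideal_dvd[OF qid tq] by blast
          thus "s \<in> q" using prime_ideal_mult[OF qp] wq by blast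
        qed
        thus False using qsub by blast
      qed
      obtain y where yq: "y \<in> q" and y0: "y \<noteq> 0" using qn ideal_0[OF qid] by blast
      have step: "\<exists>z'. z' \<in> q \<and> w * z = t * z'" if zq: "z \<in> q" for z
      proof -
        have "z \<in> p" using zq qsub by blast
        then obtain z' where z': "w * z = t * z'" using key by (auto elim!: dvdE)
        have "w * z \<in> q" using ideal_mult[OF qid zq] .
        hence "t * z' \<in> q" using z' by simp
        hence "z' \<in> q" using prime_ideal_mult[OF qp] tq by blast
        thus ?thesis using z' by blast
      qed
      define nx where "nx z = (SOME z'. z' \<in> q \<and> w * z = t * z')" for z
      have nx: "nx z \<in> q \<and> w * z = t * nx z" if "z \<in> q" for z
        unfolding nx_def by (rule someI_ex[OF step[OF that]])
      define ys where "ys n = (nx ^^ n) y" for n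
      have ysS: "ys (Suc n) = nx (ys n)" for n by (simp add: ys_def)
      have ysq: "ys n \<in> q" for n
        by (induction n) (auto simp: ysS nx yq, simp add: ys_def yq)
      have ysrel: "w * ys n = t * ys (Suc n)" for n using nx[OF ysq[of n]] ysS[of n] by simp
      have pow: "w ^ n * y = t ^ n * ys n" for n
      proof (induction n)
        case 0 then show ?case by (simp add: ys_def)
      next
        case (Suc n)
        have "w ^ Suc n * y = w * (w ^ n * y)" by (simp add: ac_simps)
        also have "\<dots> = t ^ n * (w * ys n)" using Suc by (simp add: ac_simps)
        also have "\<dots> = t ^ Suc n * ys (Suc n)" using ysrel[of n] by (simp add: ac_simps)
        finally show ?case .
      qed
      have ys0: "ys n \<noteq> 0" for n
      proof
        assume "ys n = 0"
        hence "w ^ n * y = 0" using pow[of n] by simp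
        thus False using w0 y0 by simp
      qed
      define I where "I n = {r. \<exists>m. ys n dvd w ^ m * r}" for n
      have Iid: "is_ideal (I n)" for n
        unfolding is_ideal_def
      proof (intro conjI ballI allI impI)
        show "0 \<in> I n" unfolding I_def by simp
      next
        fix a b assume "a \<in> I n" "b \<in> I n"
        then obtain m m' where m: "ys n dvd w ^ m * a" and m': "ys n dvd w ^ m' * b" unfolding I_def by blast
        have "ys n dvd w ^ m' * (w ^ m * a) + w ^ m * (w ^ m' * b)" using m m' by simp
        hence "ys n dvd w ^ (m + m') * (a + b)" by (simp add: power_add algebra_simps)
        thus "a + b \<in> I n" unfolding I_def by blast
      next
        fix a assume "a \<in> I n"
        then obtain m where m: "ys n dvd w ^ m * a" unfolding I_def by blast
        hence "ys n dvd w ^ m * (- a)" by simp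
        thus "- a \<in> I n" unfolding I_def by blast
      next
        fix r a assume "a \<in> I n"
        then obtain m where m: "ys n dvd w ^ m * a" unfolding I_def by blast
        hence "ys n dvd w ^ m * (r * a)" by (metis dvd_mult mult.left_commute)
        thus "r * a \<in> I n" unfolding I_def by blast
      qed
      have Iinc: "I n \<subseteq> I (Suc n)" for n
      proof
        fix a assume "a \<in> I n"
        then obtain m where m: "ys n dvd w ^ m * a" unfolding I_def by blast
        have "ys (Suc n) dvd w * ys n" using ysrel[of n] by (metis dvd_triv_right)
        also have "w * ys n dvd w * (w ^ m * a)" using m by simp
        finally have "ys (Suc n) dvd w ^ Suc m * a" by (simp add: ac_simps)
        thus "a \<in> I (Suc n)" unfolding I_def by blast
      qed
      obtain N where N: "\<forall>m\<ge>N. I m = I N" using noeth_acc[of I, OF noeth Iid Iinc] by blast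
      have "ys (Suc N) \<in> I (Suc N)" unfolding I_def by (rule CollectI, rule exI[of _ 0]) simp
      moreover have "I (Suc N) = I N" by (rule N[rule_format]) simp
      ultimately have "ys (Suc N) \<in> I N" by simp
      then obtain m b where mb: "w ^ m * ys (Suc N) = ys N * b" unfolding I_def by (auto elim!: dvdE)
      have "ys N * w ^ Suc m = w ^ m * (t * ys (Suc N))" using ysrel[of N] by (simp add: ac_simps)
      also have "\<dots> = ys N * (t * b)" using mb by (simp add: ac_simps)
      finally have "w ^ Suc m = t * b" using ys0[of N] by simp
      hence "w ^ Suc m \<in> p" using ideal_mult2[OF pid tp] by simp
      hence "w \<in> p" using prime_ideal_pow[OF pp] by blast
      thus False using wp by blast
    qed
    have "p \<noteq> {0}" using gp g by blast
    thus ?thesis using height_one[OF pp _ below] unfolding p_def by blast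
  qed
qed



lemma der_add: "derivation_on UNIV E \<Longrightarrow> E (x + y) = E x + E y"
  unfolding derivation_on_def by blast
lemma der_mult: "derivation_on UNIV E \<Longrightarrow> E (x * y) = x * E y + y * E x"
  unfolding derivation_on_def by blast
lemma der_0: "derivation_on UNIV E \<Longrightarrow> E 0 = 0"
  using der_add[of E 0 0] by simp
lemma der_1: "derivation_on UNIV E \<Longrightarrow> E 1 = 0"
  using der_mult[of E 1 1] by simp
lemma der_sum: "derivation_on UNIV E \<Longrightarrow> E (sum f F) = (\<Sum>x\<in>F. E (f x))"
  by (induction F rule: infinite_finite_induct) (auto simp: der_0 der_add)
lemma der_of_nat_mult: "derivation_on UNIV E \<Longrightarrow> E (of_nat c * a) = of_nat c * E a"
  by (induction c) (auto simp: der_0 der_add distrib_right)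
lemma der_pow: "derivation_on UNIV E \<Longrightarrow> E (x ^ Suc n) = of_nat (Suc n) * x ^ n * E x"
proof (induction n)
  case 0 then show ?case by simp
next
  case (Suc n)
  have "E (x ^ Suc (Suc n)) = E (x * x ^ Suc n)" by simp
  also have "\<dots> = x * E (x ^ Suc n) + x ^ Suc n * E x" using der_mult[OF Suc.prems] .
  also have "\<dots> = of_nat (Suc (Suc n)) * x ^ Suc n * E x" using Suc by (simp add: algebra_simps)
  finally show ?case .
qed

lemma iter_add: "derivation_on UNIV E \<Longrightarrow> (E ^^ n) (a + b) = (E ^^ n) a + (E ^^ n) b"
  by (induction n) (auto simp: der_add)
lemma iter_0: "derivation_on UNIV E \<Longrightarrow> (E ^^ n) 0 = 0"
  by (induction n) (auto simp: der_0)
lemma iter_of_nat_mult: "derivation_on UNIV E \<Longrightarrow> (E ^^ n) (of_nat c * a) = of_nat c * (E ^^ n) a"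
  by (induction n) (auto simp: der_of_nat_mult)
lemma iter_Suc_right: "(E ^^ Suc n) a = (E ^^ n) (E a)"
  by (simp only: funpow_Suc_right comp_apply)
lemma iter_mono: "derivation_on UNIV E \<Longrightarrow> (E ^^ n) a = 0 \<Longrightarrow> n \<le> m \<Longrightarrow> (E ^^ m) a = 0"
proof -
  assume E: "derivation_on UNIV E" and z: "(E ^^ n) a = 0" and nm: "n \<le> m"
  have "(E ^^ m) a = (E ^^ (m - n)) ((E ^^ n) a)" using nm by (simp add: funpow_add[symmetric, THEN fun_cong, simplified comp_def])
  thus ?thesis using z iter_0[OF E] by simp
qed

lemma LN_add: "derivation_on UNIV E \<Longrightarrow> (E ^^ n) a = 0 \<Longrightarrow> (E ^^ m) b = 0 \<Longrightarrow> (E ^^ max n m) (a + b) = 0"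
  using iter_mono[of E n a "max n m"] iter_mono[of E m b "max n m"] by (simp add: iter_add)

lemma LN_sum:
  assumes E: "derivation_on UNIV E" and F: "finite F" and h: "\<And>x. x \<in> F \<Longrightarrow> \<exists>n. (E ^^ n) (f x) = 0"
  shows "\<exists>n. (E ^^ n) (sum f F) = 0"
  using F h
proof (induction F rule: finite_induct)
  case empty then show ?case using iter_0[OF E] by auto
next
  case (insert x F)
  obtain n where n: "(E ^^ n) (f x) = 0" using insert.prems by blast
  obtain m where m: "(E ^^ m) (sum f F) = 0" using insert by blast
  show ?case using LN_add[OF E n m] insert.hyps by auto
qed

definition deg_is :: "('a::comm_ring_1 \<Rightarrow> 'a) \<Rightarrow> 'a \<Rightarrow> nat \<Rightarrow> bool" where
  "deg_is E a m \<longleftrightarrow> (E ^^ m) a \<noteq> 0 \<and> (E ^^ Suc m) a = 0"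

lemma top_lemma:
  fixes E :: "'a::{idom,ring_char_0} \<Rightarrow> 'a"
  assumes E: "derivation_on UNIV E"
  shows "\<forall>a b m n. m + n = N \<longrightarrow> (E ^^ Suc m) a = 0 \<longrightarrow> (E ^^ Suc n) b = 0 \<longrightarrow>
    (E ^^ Suc N) (a * b) = 0 \<and> (\<exists>C>0. (E ^^ N) (a * b) = of_nat C * (E ^^ m) a * (E ^^ n) b)"
proof (induction N)
  case 0
  show ?case
  proof (intro allI impI)
    fix a b :: 'a and m n :: nat
    assume "m + n = 0" "(E ^^ Suc m) a = 0" "(E ^^ Suc n) b = 0"
    hence "m = 0" "n = 0" "E a = 0" "E b = 0" by auto
    thus "(E ^^ Suc 0) (a * b) = 0 \<and> (\<exists>C>0. (E ^^ 0) (a * b) = of_nat C * (E ^^ m) a * (E ^^ n) b)"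
      using der_mult[OF E, of a b] by (auto intro!: exI[of _ 1])
  qed
next
  case (Suc N)
  show ?case
  proof (intro allI impI)
    fix a b :: 'a and m n :: nat
    assume mn: "m + n = Suc N" and a: "(E ^^ Suc m) a = 0" and b: "(E ^^ Suc n) b = 0"
    have split: "(E ^^ Suc k) (a * b) = (E ^^ k) (a * E b) + (E ^^ k) (E a * b)" for k
      by (simp only: iter_Suc_right der_mult[OF E] iter_add[OF E] mult.commute[of b])
    have T1: "(E ^^ Suc N) (a * E b) = 0 \<and> (\<exists>C. (E ^^ N) (a * E b) = of_nat C * (E ^^ m) a * (E ^^ n) b \<and> (n > 0 \<longrightarrow> C > 0))"
    proof (cases n)
      case 0
      hence "E b = 0" using b by simp
      thus ?thesis using iter_0[OF E] der_0[OF E] 0 by (auto intro!: exI[of _ 0])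
    next
      case (Suc n')
      have "(E ^^ Suc n') (E b) = 0" using b Suc by (simp only: iter_Suc_right)
      moreover have "m + n' = N" using mn Suc by simp
      ultimately have "(E ^^ Suc N) (a * E b) = 0 \<and> (\<exists>C>0. (E ^^ N) (a * E b) = of_nat C * (E ^^ m) a * (E ^^ n') (E b))"
        using Suc.IH a by blast
      moreover have "(E ^^ n') (E b) = (E ^^ n) b" using Suc by (simp only: iter_Suc_right)
      ultimately show ?thesis by auto
    qed
    have T2: "(E ^^ Suc N) (E a * b) = 0 \<and> (\<exists>C. (E ^^ N) (E a * b) = of_nat C * (E ^^ m) a * (E ^^ n) b \<and> (m > 0 \<longrightarrow> C > 0))"
    proof (cases m)
      case 0
      hence "E a = 0" using a by simp
      thus ?thesis using iter_0[OF E] der_0[OF E] 0 by (auto intro!: exI[of _ 0])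
    next
      case (Suc m')
      have "(E ^^ Suc m') (E a) = 0" using a Suc by (simp only: iter_Suc_right)
      moreover have "m' + n = N" using mn Suc by simp
      ultimately have "(E ^^ Suc N) (E a * b) = 0 \<and> (\<exists>C>0. (E ^^ N) (E a * b) = of_nat C * (E ^^ m') (E a) * (E ^^ n) b)"
        using Suc.IH b by blast
      moreover have "(E ^^ m') (E a) = (E ^^ m) a" using Suc by (simp only: iter_Suc_right)
      ultimately show ?thesis by auto
    qed
    obtain C1 where C1: "(E ^^ N) (a * E b) = of_nat C1 * (E ^^ m) a * (E ^^ n) b" "n > 0 \<longrightarrow> C1 > 0" using T1 by blast
    obtain C2 where C2: "(E ^^ N) (E a * b) = of_nat C2 * (E ^^ m) a * (E ^^ n) b" "m > 0 \<longrightarrow> C2 > 0" using T2 by blast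
    have "(E ^^ Suc (Suc N)) (a * b) = 0" using split[of "Suc N"] T1 T2 by simp
    moreover have "(E ^^ Suc N) (a * b) = of_nat (C1 + C2) * (E ^^ m) a * (E ^^ n) b"
      using split[of N] C1(1) C2(1) by (simp add: algebra_simps)
    moreover have "C1 + C2 > 0" using C1(2) C2(2) mn by auto
    ultimately show "(E ^^ Suc (Suc N)) (a * b) = 0 \<and> (\<exists>C>0. (E ^^ Suc N) (a * b) = of_nat C * (E ^^ m) a * (E ^^ n) b)"
      by blast
  qed
qed

lemma deg_mult:
  fixes E :: "'a::{idom,ring_char_0} \<Rightarrow> 'a"
  assumes E: "derivation_on UNIV E" and a: "deg_is E a m" and b: "deg_is E b n"
  shows "deg_is E (a * b) (m + n)"
proof -
  have h: "(E ^^ Suc (m + n)) (a * b) = 0 \<and> (\<exists>C>0. (E ^^ (m + n)) (a * b) = of_nat C * (E ^^ m) a * (E ^^ n) b)"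
    using top_lemma[OF E, of "m + n"] a b unfolding deg_is_def by blast
  then obtain C where C: "C > 0" "(E ^^ (m + n)) (a * b) = of_nat C * (E ^^ m) a * (E ^^ n) b" by blast
  have "(E ^^ (m + n)) (a * b) \<noteq> 0" using C a b unfolding deg_is_def by simp
  thus ?thesis using h unfolding deg_is_def by blast
qed

lemma deg_unique:
  assumes E: "derivation_on UNIV E" and "deg_is E a m" "deg_is E a m'"
  shows "m = m'"
proof (rule ccontr)
  assume "m \<noteq> m'"
  hence "m < m' \<or> m' < m" by arith
  thus False
  proof
    assume "m < m'"
    hence "(E ^^ m') a = 0" using iter_mono[OF E, of "Suc m" a m'] assms(2) unfolding deg_is_def by simp
    thus False using assms(3) unfolding deg_is_def by simp
  next
    assume "m' < m"
    hence "(E ^^ m) a = 0" using iter_mono[OF E, of "Suc m'" a m] assms(3) unfolding deg_is_def by simp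
    thus False using assms(2) unfolding deg_is_def by simp
  qed
qed

lemma deg_one:
  fixes E :: "'a::{idom,ring_char_0} \<Rightarrow> 'a"
  assumes E: "derivation_on UNIV E"
  shows "deg_is E 1 0"
  unfolding deg_is_def using der_1[OF E] by simp

lemma deg_pow:
  fixes E :: "'a::{idom,ring_char_0} \<Rightarrow> 'a"
  assumes E: "derivation_on UNIV E" and a: "deg_is E a m"
  shows "deg_is E (a ^ k) (k * m)"
proof (induction k)
  case 0 then show ?case using deg_one[OF E] by simp
next
  case (Suc k)
  have "deg_is E (a * a ^ k) (m + k * m)" by (rule deg_mult[OF E a Suc])
  thus ?case by simp
qed

lemma deg_D:
  assumes "deg_is E a (Suc m)"
  shows "deg_is E (E a) m"
proof -
  have e: "(E ^^ Suc m) a = (E ^^ m) (E a)" "(E ^^ Suc (Suc m)) a = (E ^^ Suc m) (E a)"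
    by (rule iter_Suc_right)+
  show ?thesis using assms unfolding deg_is_def e by blast
qed

lemma deg_exists:
  assumes "a \<noteq> 0" "(E ^^ n) a = 0"
  shows "\<exists>m. deg_is E a m"
proof -
  define k where "k = (LEAST k. (E ^^ k) a = 0)"
  have k: "(E ^^ k) a = 0" unfolding k_def by (rule LeastI[of _ n]) (rule assms(2))
  have "k \<noteq> 0"
  proof
    assume "k = 0"
    with k have "a = 0" by simp
    with assms(1) show False ..
  qed
  then obtain m where m: "k = Suc m" by (cases k) auto
  have "(E ^^ m) a \<noteq> 0"
  proof
    assume "(E ^^ m) a = 0"
    hence "k \<le> m" unfolding k_def by (rule Least_le)
    thus False using m by simp
  qed
  thus ?thesis using k m unfolding deg_is_def by blast
qed

lemma deg_smul:
  fixes E :: "'a::{idom,ring_char_0} \<Rightarrow> 'a"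
  assumes E: "derivation_on UNIV E" and c: "c \<noteq> 0" and h: "deg_is E (of_nat c * a) m"
  shows "deg_is E a m"
proof -
  have e: "(E ^^ m) (of_nat c * a) = of_nat c * (E ^^ m) a"
    "(E ^^ Suc m) (of_nat c * a) = of_nat c * (E ^^ Suc m) a" by (rule iter_of_nat_mult[OF E])+
  have "of_nat c * (E ^^ m) a \<noteq> 0" "of_nat c * (E ^^ Suc m) a = 0" using h unfolding deg_is_def e by blast+
  thus ?thesis using c unfolding deg_is_def by simp
qed



locale dsetup = grd G for G :: "int \<Rightarrow> 'a::{idom,ring_char_0} set" +
  fixes d :: nat and \<delta> :: "'a \<Rightarrow> 'a"
  assumes noeth: "noetherian TYPE('a)" and nrm: "normal_domain TYPE('a)"
    and dPi: "d \<in> Pi_star G" and dunit: "(of_nat d :: 'a) dvd 1"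
    and der: "derivation_on (veronese G d) \<delta>"
begin

lemma d_pos: "d > 0" using dPi unfolding Pi_star_def by blast
lemma d_Suc: "d = Suc (d - 1)" using d_pos by simp
lemma d_nz: "(of_nat d :: 'a) \<noteq> 0" using d_pos by simp

lemma A_Mr: "veronese G d = Mr d 0" by (rule ver_Mr)

lemma A_hom: "x \<in> G k \<Longrightarrow> int d dvd k \<Longrightarrow> x \<in> veronese G d"
  using Mr_hom[of x k d] Mr_cong[of d k 0] by (simp add: A_Mr)
lemma A_0: "0 \<in> veronese G d" using Mr_0 by (simp add: A_Mr)
lemma A_add: "x \<in> veronese G d \<Longrightarrow> y \<in> veronese G d \<Longrightarrow> x + y \<in> veronese G d"
  using Mr_add by (simp add: A_Mr)
lemma A_mult: "x \<in> veronese G d \<Longrightarrow> y \<in> veronese G d \<Longrightarrow> x * y \<in> veronese G d"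
  using Mr_mult[of x d 0 y 0] by (simp add: A_Mr)
lemma A_pow: "x \<in> veronese G d \<Longrightarrow> x ^ n \<in> veronese G d"
  using Mr_pow[of x d 0 n] by (simp add: A_Mr)
lemma A_sum: "finite F \<Longrightarrow> (\<And>k. k \<in> F \<Longrightarrow> f k \<in> veronese G d) \<Longrightarrow> sum f F \<in> veronese G d"
  using Mr_sum[of F f d 0] by (simp add: A_Mr)

lemma dA: "x \<in> veronese G d \<Longrightarrow> \<delta> x \<in> veronese G d" using der unfolding derivation_on_def by blast
lemma d_add: "x \<in> veronese G d \<Longrightarrow> y \<in> veronese G d \<Longrightarrow> \<delta> (x + y) = \<delta> x + \<delta> y"
  using der unfolding derivation_on_def by blast
lemma d_mult: "x \<in> veronese G d \<Longrightarrow> y \<in> veronese G d \<Longrightarrow> \<delta> (x * y) = x * \<delta> y + y * \<delta> x"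
  using der unfolding derivation_on_def by blast
lemma d_zero: "\<delta> 0 = 0" using d_add[OF A_0 A_0] by simp

lemma d_pow: "a \<in> veronese G d \<Longrightarrow> \<delta> (a ^ Suc n) = of_nat (Suc n) * a ^ n * \<delta> a"
proof (induction n)
  case 0 then show ?case by simp
next
  case (Suc n)
  have "\<delta> (a ^ Suc (Suc n)) = \<delta> (a * a ^ Suc n)" by simp
  also have "\<dots> = a * \<delta> (a ^ Suc n) + a ^ Suc n * \<delta> a" using d_mult[OF Suc.prems A_pow[OF Suc.prems]] .
  also have "\<dots> = of_nat (Suc (Suc n)) * a ^ Suc n * \<delta> a" using Suc by (simp add: algebra_simps)
  finally show ?case .
qed

lemma d_powd: "a \<in> veronese G d \<Longrightarrow> \<delta> (a ^ d) = of_nat d * a ^ (d - 1) * \<delta> a"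
  using d_pow[of a "d - 1"] d_Suc by simp

lemma d_sum: "finite F \<Longrightarrow> (\<And>k. k \<in> F \<Longrightarrow> f k \<in> veronese G d) \<Longrightarrow> \<delta> (sum f F) = (\<Sum>k\<in>F. \<delta> (f k))"
proof (induction F rule: finite_induct)
  case empty then show ?case by (simp add: d_zero)
next
  case (insert x F)
  have "\<delta> (sum f (insert x F)) = \<delta> (f x + sum f F)" using insert.hyps by simp
  also have "\<dots> = \<delta> (f x) + \<delta> (sum f F)"
    by (rule d_add) (use insert.prems A_sum[OF insert.hyps(1)] in auto)
  finally show ?case using insert by simp
qed

lemma gdvd_comp:
  assumes g: "g \<in> G j" and dv: "g dvd y"
  shows "g dvd comp y k"
proof -
  obtain b where "y = g * b" using dv by (elim dvdE)
  hence "comp y k = g * comp b (k - j)" using comp_mult_hom[OF g] by simp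
  thus ?thesis by simp
qed

lemma divis:
  assumes x: "x \<in> G i" "x \<noteq> 0"
  shows "x ^ (d - 1) dvd \<delta> (x ^ d)"
proof (rule ccontr)
  define g where "g = x ^ (d - 1)"
  define f where "f = \<delta> (x ^ d)"
  assume ndv: "\<not> x ^ (d - 1) dvd \<delta> (x ^ d)"
  hence ngf: "\<not> g dvd f" unfolding g_def f_def .
  have g0: "g \<noteq> 0" using x unfolding g_def by simp
  have gG: "g \<in> G (int (d - 1) * i)" unfolding g_def by (rule Gpow[OF x(1)])
  define Z where "Z = {z. \<exists>w j. w \<in> G j \<and> int d dvd (i + j) \<and> z = w ^ d}"
  have xdA: "x ^ d \<in> veronese G d" by (rule A_hom[OF Gpow[OF x(1)]]) simp
  have Zf: "g dvd w ^ d * f" if w: "w \<in> G j" and dij: "int d dvd (i + j)" for w j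
  proof -
    have xwA: "x * w \<in> veronese G d" using A_hom[OF Gmult[OF x(1) w] dij] .
    have wdA: "w ^ d \<in> veronese G d" by (rule A_hom[OF Gpow[OF w]]) simp
    have "\<delta> ((x * w) ^ d) = of_nat d * (x * w) ^ (d - 1) * \<delta> (x * w)" by (rule d_powd[OF xwA])
    moreover have "\<delta> ((x * w) ^ d) = x ^ d * \<delta> (w ^ d) + w ^ d * f"
      unfolding f_def power_mult_distrib by (rule d_mult[OF xdA wdA])
    ultimately have "w ^ d * f = of_nat d * (x * w) ^ (d - 1) * \<delta> (x * w) - x ^ d * \<delta> (w ^ d)"
      by (metis add_diff_cancel_left')
    also have "\<dots> = g * (of_nat d * w ^ (d - 1) * \<delta> (x * w) - x * \<delta> (w ^ d))"
    proof -
      have "x ^ d = x ^ (d - 1) * x" using d_Suc by (metis power_Suc2)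
      thus ?thesis unfolding g_def by (simp add: power_mult_distrib algebra_simps)
    qed
    finally show ?thesis by simp
  qed
  have "\<exists>k. \<not> g dvd comp f k"
  proof (rule ccontr)
    assume "\<not> (\<exists>k. \<not> g dvd comp f k)"
    hence "\<forall>k. g dvd comp f k" by blast
    hence "g dvd (\<Sum>k\<in>{k. comp f k \<noteq> 0}. comp f k)" by (simp add: dvd_sum)
    thus False using ngf comp_sum[OF fin_supp, of f] by simp
  qed
  then obtain k0 where k0: "\<not> g dvd comp f k0" by blast
  define ann where "ann c = {r. g dvd r * c}" for c
  define F where "F = {P. \<exists>c k. P = ann c \<and> c \<in> G k \<and> \<not> g dvd c \<and> Z \<subseteq> ann c}"
  have ann_id: "is_ideal (ann c)" for c
    unfolding is_ideal_def ann_def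
    by (auto simp: distrib_right intro: dvd_add dvd_mult simp del: mult.assoc simp add: mult.assoc)
  have Zann0: "Z \<subseteq> ann (comp f k0)"
  proof
    fix z assume "z \<in> Z"
    then obtain w j where w: "w \<in> G j" "int d dvd (i + j)" "z = w ^ d" unfolding Z_def by blast
    have zG: "z \<in> G (int d * j)" using Gpow[OF w(1)] w(3) by simp
    have "g dvd z * f" using Zf[OF w(1) w(2)] w(3) by simp
    hence "g dvd comp (z * f) (k0 + int d * j)" by (rule gdvd_comp[OF gG])
    also have "comp (z * f) (k0 + int d * j) = z * comp f k0" using comp_mult_hom[OF zG] by simp
    finally show "z \<in> ann (comp f k0)" unfolding ann_def by (simp add: mult.commute)
  qed
  have "ann (comp f k0) \<in> F" unfolding F_def using Zann0 k0 comp_G by blast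
  hence Fne: "F \<noteq> {}" by blast
  have Fid: "\<And>P. P \<in> F \<Longrightarrow> is_ideal P" unfolding F_def using ann_id by blast
  obtain p where pF: "p \<in> F" and pmax: "\<forall>J\<in>F. p \<subseteq> J \<longrightarrow> J = p"
    using noeth_max[OF noeth Fne Fid] by blast
  obtain c0 k1 where p: "p = ann c0" and c0G: "c0 \<in> G k1" and c0: "\<not> g dvd c0" and Zp: "Z \<subseteq> ann c0"
    using pF unfolding F_def by blast
  have pid: "is_ideal p" using p ann_id by simp
  have pnU: "p \<noteq> UNIV"
  proof
    assume "p = UNIV"
    hence "1 \<in> ann c0" using p by simp
    thus False using c0 unfolding ann_def by simp
  qed
  have phom: "comp r k \<in> p" if rp: "r \<in> p" for r k
  proof -
    have "g dvd c0 * r" using rp unfolding p ann_def by (simp add: mult.commute)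
    hence "g dvd comp (c0 * r) (k + k1)" by (rule gdvd_comp[OF gG])
    also have "comp (c0 * r) (k + k1) = c0 * comp r k" using comp_mult_hom[OF c0G] by simp
    finally show ?thesis unfolding p ann_def by (simp add: mult.commute)
  qed
  have php: "a \<in> p \<or> b \<in> p" if a: "a \<in> G ia" and b: "b \<in> G ib" and ab: "a * b \<in> p" for a b ia ib
  proof (cases "a \<in> p")
    case True thus ?thesis by blast
  next
    case False
    have sub: "p \<subseteq> ann (a * c0)" unfolding p ann_def
      by (auto simp: mult.left_commute[of _ a] intro: dvd_mult)
    have nd: "\<not> g dvd a * c0" using False unfolding p ann_def by simp
    have "ann (a * c0) \<in> F" unfolding F_def
      using Gmult[OF a c0G] nd Zp sub p by blast
    hence eq: "ann (a * c0) = p" using pmax sub by blast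
    have "g dvd (a * b) * c0" using ab unfolding p ann_def by simp
    hence "b \<in> ann (a * c0)" unfolding ann_def by (simp add: ac_simps)
    thus ?thesis using eq by blast
  qed
  have pprime: "prime_ideal p" by (rule hom_prime[OF pid pnU phom php])
  have phomog: "homogeneous_ideal G p"
    unfolding homogeneous_ideal_def
  proof (intro conjI pid ballI allI impI)
    fix x c i assume "x \<in> p" "decomp G x c"
    hence "c = comp x" using comp_unique by simp
    thus "c i \<in> p" using phom[OF \<open>x \<in> p\<close>] by simp
  qed
  have pann: "p = {r. g dvd r * c0}" unfolding p ann_def ..
  have ph: "height p = 1" unfolding pann
    by (rule ann_height1[OF noeth nrm g0 c0]) (use pprime pann in simp)
  define e where "e = e_quot G p"
  have cop: "coprime e (int d)"
  proof (rule ccontr)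
    assume "\<not> coprime e (int d)"
    then obtain c where c: "c dvd e" "c dvd int d" "\<not> is_unit c" by (elim not_coprimeE)
    have "\<bar>c\<bar> \<noteq> 1" using c(3) by auto
    then obtain q where q: "prime q" "q dvd c" using prime_factor_int by blast
    have q0: "q \<ge> 0" using q(1) by (simp add: prime_ge_0_int)
    define l where "l = nat q"
    have lq: "int l = q" unfolding l_def using q0 by simp
    have lp: "prime l" using q(1) lq by (metis prime_nat_int_transfer)
    have "int l dvd int d" using q(2) c(2) lq by (metis dvd_trans)
    hence ld: "l dvd d" by simp
    have "int l dvd e" using q(2) c(1) lq by (metis dvd_trans)
    hence "l \<in> Pi_set G" unfolding Pi_set_def e_def using lp phomog pprime ph by blast
    thus False using dPi ld unfolding Pi_star_def by blast
  qed
  define S where "S = {j. \<not> G j \<subseteq> p}"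
  have eS: "e = Gcd S" unfolding e_def e_quot_def S_def ..
  have S0: "0 \<in> S" unfolding S_def using one_G0 prime_ideal_one[OF pprime] by blast
  have Sadd: "a + b \<in> S" if abS: "a \<in> S" "b \<in> S" for a b
  proof -
    obtain u where u: "u \<in> G a" "u \<notin> p" using abS(1) unfolding S_def by blast
    obtain v where v: "v \<in> G b" "v \<notin> p" using abS(2) unfolding S_def by blast
    have "u * v \<notin> p" using prime_ideal_mult[OF pprime] u v by blast
    thus ?thesis unfolding S_def using Gmult[OF u(1) v(1)] by blast
  qed
  obtain j where jS: "j \<in> S" and jd: "int d dvd (j - (- i))"
    using semigroup_residues[OF S0 Sadd, of d "- i"] cop eS d_pos by blast
  obtain w where w: "w \<in> G j" "w \<notin> p" using jS unfolding S_def by blast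
  have "int d dvd (i + j)" using jd by (simp add: add.commute)
  hence "w ^ d \<in> Z" unfolding Z_def using w(1) by blast
  hence "w ^ d \<in> p" using Zp p by blast
  hence "w \<in> p" using prime_ideal_pow[OF pprime] by blast
  thus False using w(2) by blast
qed

end


context dsetup
begin

definition Dh :: "'a \<Rightarrow> 'a" where
  "Dh x = (if x = 0 then 0 else (SOME y. \<delta> (x ^ d) = of_nat d * x ^ (d - 1) * y))"

lemma Dh_0: "Dh 0 = 0" by (simp add: Dh_def)

lemma Dh_eq:
  assumes x: "x \<in> G i"
  shows "\<delta> (x ^ d) = of_nat d * x ^ (d - 1) * Dh x"
proof (cases "x = 0")
  case True thus ?thesis using d_pos by (simp add: Dh_0 d_zero zero_power)
next
  case False
  obtain b where b: "\<delta> (x ^ d) = x ^ (d - 1) * b" using divis[OF x False] unfolding dvd_def by blast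
  obtain di :: 'a where di: "1 = of_nat d * di" using dunit unfolding dvd_def by blast
  have "\<delta> (x ^ d) = of_nat d * x ^ (d - 1) * (di * b)"
    using b di by (metis (no_types, lifting) mult.assoc mult.commute mult.right_neutral)
  hence ex: "\<exists>y. \<delta> (x ^ d) = of_nat d * x ^ (d - 1) * y" by blast
  show ?thesis unfolding Dh_def using False someI_ex[OF ex] by simp
qed

lemma Dh_uniq:
  assumes x: "x \<in> G i" "x \<noteq> 0" and y: "\<delta> (x ^ d) = of_nat d * x ^ (d - 1) * y"
  shows "Dh x = y"
proof -
  have "of_nat d * x ^ (d - 1) * Dh x = of_nat d * x ^ (d - 1) * y" using Dh_eq[OF x(1)] y by metis
  moreover have "of_nat d * x ^ (d - 1) \<noteq> (0::'a)" using x(2) d_nz by simp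
  ultimately show ?thesis using mult_left_cancel by blast
qed

lemma Dh_mult:
  assumes x: "x \<in> G i" and y: "y \<in> G j"
  shows "Dh (x * y) = x * Dh y + y * Dh x"
proof (cases "x = 0 \<or> y = 0")
  case True thus ?thesis by (auto simp: Dh_0)
next
  case False
  hence nz: "x \<noteq> 0" "y \<noteq> 0" by auto
  have xdA: "x ^ d \<in> veronese G d" by (rule A_hom[OF Gpow[OF x]]) simp
  have ydA: "y ^ d \<in> veronese G d" by (rule A_hom[OF Gpow[OF y]]) simp
  obtain e where e: "d = Suc e" using d_Suc by blast
  have "\<delta> ((x * y) ^ d) = \<delta> (x ^ d * y ^ d)" by (simp add: power_mult_distrib)
  also have "\<dots> = x ^ d * \<delta> (y ^ d) + y ^ d * \<delta> (x ^ d)" by (rule d_mult[OF xdA ydA])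
  also have "\<dots> = x ^ d * (of_nat d * y ^ (d - 1) * Dh y) + y ^ d * (of_nat d * x ^ (d - 1) * Dh x)"
    using Dh_eq[OF x] Dh_eq[OF y] by simp
  also have "\<dots> = of_nat d * (x * y) ^ (d - 1) * (x * Dh y + y * Dh x)"
    unfolding e by (simp add: power_mult_distrib algebra_simps)
  finally have eq: "\<delta> ((x * y) ^ d) = of_nat d * (x * y) ^ (d - 1) * (x * Dh y + y * Dh x)" .
  show ?thesis by (rule Dh_uniq[OF Gmult[OF x y] _ eq]) (use nz in simp)
qed

lemma Dh_A:
  assumes x: "x \<in> G k" and dk: "int d dvd k"
  shows "Dh x = \<delta> x"
proof (cases "x = 0")
  case True thus ?thesis by (simp add: Dh_0 d_zero)
next
  case False
  show ?thesis by (rule Dh_uniq[OF x False]) (rule d_powd[OF A_hom[OF x dk]])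
qed

lemma Dh_add:
  assumes x: "x \<in> G i" and y: "y \<in> G i"
  shows "Dh (x + y) = Dh x + Dh y"
proof (cases "x = 0")
  case True thus ?thesis by (simp add: Dh_0)
next
  case False
  define w where "w = x ^ (d - 1)"
  have wG: "w \<in> G (int (d - 1) * i)" unfolding w_def by (rule Gpow[OF x])
  have w0: "w \<noteq> 0" unfolding w_def using False by simp
  have dd: "int d dvd (i + int (d - 1) * i)"
  proof -
    have "i + int (d - 1) * i = int d * i" using d_pos by (simp add: of_nat_diff algebra_simps)
    thus ?thesis by simp
  qed
  have zA: "z * w \<in> veronese G d" if z: "z \<in> G i" for z
    by (rule A_hom[OF Gmult[OF z wG] dd])
  have key: "w * Dh z = \<delta> (z * w) - z * Dh w" if z: "z \<in> G i" for z
  proof -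
    have "Dh (z * w) = \<delta> (z * w)" by (rule Dh_A[OF Gmult[OF z wG] dd])
    moreover have "Dh (z * w) = z * Dh w + w * Dh z" by (rule Dh_mult[OF z wG])
    ultimately show ?thesis by (simp add: algebra_simps)
  qed
  have xy: "x + y \<in> G i" by (rule Gadd[OF x y])
  have k1: "w * Dh (x + y) = \<delta> ((x + y) * w) - (x + y) * Dh w" by (rule key[OF xy])
  have k2: "\<delta> ((x + y) * w) = \<delta> (x * w) + \<delta> (y * w)"
    unfolding distrib_right by (rule d_add[OF zA[OF x] zA[OF y]])
  have "w * Dh (x + y) = (\<delta> (x * w) - x * Dh w) + (\<delta> (y * w) - y * Dh w)"
    unfolding k1 k2 by (simp add: algebra_simps)
  also have "\<dots> = w * (Dh x + Dh y)" unfolding key[OF x, symmetric] key[OF y, symmetric] by (simp add: algebra_simps)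
  finally show ?thesis using w0 mult_left_cancel by blast
qed

definition D :: "'a \<Rightarrow> 'a" where "D b = (\<Sum>k\<in>{k. comp b k \<noteq> 0}. Dh (comp b k))"

lemma D_F:
  assumes "finite F" "{k. comp b k \<noteq> 0} \<subseteq> F"
  shows "D b = (\<Sum>k\<in>F. Dh (comp b k))"
  unfolding D_def by (rule sum.mono_neutral_left[OF assms]) (auto simp: Dh_0)

lemma D_hom: "x \<in> G i \<Longrightarrow> D x = Dh x"
proof -
  assume x: "x \<in> G i"
  have "D x = (\<Sum>k\<in>{i}. Dh (comp x k))" by (rule D_F) (auto simp: comp_hom[OF x])
  thus ?thesis by (simp add: comp_hom[OF x])
qed

lemma D_0: "D 0 = 0" using D_hom[OF G0[of 0]] by (simp add: Dh_0)

lemma D_add: "D (a + b) = D a + D b"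
proof -
  define F where "F = {k. comp a k \<noteq> 0} \<union> {k. comp b k \<noteq> 0}"
  have fF: "finite F" unfolding F_def using fin_supp by blast
  have "D (a + b) = (\<Sum>k\<in>F. Dh (comp (a + b) k))" by (rule D_F[OF fF]) (auto simp: F_def comp_add)
  also have "\<dots> = (\<Sum>k\<in>F. Dh (comp a k) + Dh (comp b k))"
    by (rule sum.cong) (auto simp: comp_add intro!: Dh_add comp_G)
  also have "\<dots> = D a + D b"
    by (simp add: sum.distrib D_F[OF fF, of a] D_F[OF fF, of b] F_def)
  finally show ?thesis .
qed

lemma D_sum: "D (sum f F) = (\<Sum>x\<in>F. D (f x))"
  by (induction F rule: infinite_finite_induct) (auto simp: D_0 D_add)

lemma D_decomp: "D b = (\<Sum>k\<in>{k. comp b k \<noteq> 0}. D (comp b k))"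
proof -
  have "(\<Sum>k\<in>{k. comp b k \<noteq> 0}. D (comp b k)) = (\<Sum>k\<in>{k. comp b k \<noteq> 0}. Dh (comp b k))"
    by (rule sum.cong) (simp_all add: D_hom[OF comp_G])
  thus ?thesis by (simp only: D_def[of b])
qed

lemma D_mult_hom:
  assumes u: "u \<in> G i"
  shows "D (u * b) = u * D b + b * D u"
proof -
  let ?T = "{j. comp b j \<noteq> 0}"
  have b: "b = (\<Sum>j\<in>?T. comp b j)" using comp_sum fin_supp by blast
  have "D (u * b) = D (\<Sum>j\<in>?T. u * comp b j)" using b by (metis sum_distrib_left)
  also have "\<dots> = (\<Sum>j\<in>?T. D (u * comp b j))" by (rule D_sum)
  also have "\<dots> = (\<Sum>j\<in>?T. u * Dh (comp b j) + comp b j * Dh u)"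
    by (rule sum.cong) (auto simp: D_hom[OF Gmult[OF u comp_G]] Dh_mult[OF u comp_G])
  also have "\<dots> = u * D b + (\<Sum>j\<in>?T. comp b j) * Dh u"
    by (simp add: sum.distrib sum_distrib_left sum_distrib_right D_def)
  also have "\<dots> = u * D b + b * D u" using b D_hom[OF u] by simp
  finally show ?thesis .
qed

lemma D_mult: "D (a * b) = a * D b + b * D a"
proof -
  let ?S = "{i. comp a i \<noteq> 0}"
  have a: "a = (\<Sum>i\<in>?S. comp a i)" using comp_sum fin_supp by blast
  have "D (a * b) = D (\<Sum>i\<in>?S. comp a i * b)" using a by (metis sum_distrib_right)
  also have "\<dots> = (\<Sum>i\<in>?S. D (comp a i * b))" by (rule D_sum)
  also have "\<dots> = (\<Sum>i\<in>?S. comp a i * D b + b * D (comp a i))"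
    by (rule sum.cong) (auto simp: D_mult_hom[OF comp_G])
  also have "\<dots> = (\<Sum>i\<in>?S. comp a i) * D b + b * (\<Sum>i\<in>?S. D (comp a i))"
    by (simp add: sum.distrib sum_distrib_left sum_distrib_right)
  also have "\<dots> = a * D b + b * D a" using a D_decomp[of a] by simp
  finally show ?thesis .
qed

lemma D_der: "derivation_on UNIV D"
  unfolding derivation_on_def using D_add D_mult by blast

lemma D_ext:
  assumes x: "x \<in> veronese G d"
  shows "D x = \<delta> x"
proof -
  let ?S = "{k. comp x k \<noteq> 0}"
  have xM: "x \<in> Mr d 0" using x A_Mr by simp
  have "D x = (\<Sum>k\<in>?S. \<delta> (comp x k))"
    unfolding D_def
  proof (rule sum.cong)
    fix k assume "k \<in> ?S"
    hence "int d dvd k" using xM unfolding Mr_def by auto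
    thus "Dh (comp x k) = \<delta> (comp x k)" by (rule Dh_A[OF comp_G])
  qed simp
  also have "\<dots> = \<delta> (\<Sum>k\<in>?S. comp x k)"
    by (rule d_sum[symmetric, OF fin_supp]) (use Mr_comp[OF xM] A_Mr in auto)
  also have "(\<Sum>k\<in>?S. comp x k) = x" using comp_sum fin_supp by (metis order_refl)
  finally show ?thesis .
qed

lemma ext_unique:
  assumes D1: "derivation_on UNIV D1" and D2: "derivation_on UNIV D2"
    and eq: "\<forall>x\<in>veronese G d. D1 x = D2 x"
  shows "D1 = D2"
proof -
  have hom: "D1 x = D2 x" if x: "x \<in> G i" for x i
  proof (cases "x = 0")
    case True thus ?thesis using der_0[OF D1] der_0[OF D2] by simp
  next
    case False
    have xdA: "x ^ d \<in> veronese G d" by (rule A_hom[OF Gpow[OF x]]) simp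
    have "of_nat d * x ^ (d - 1) * D1 x = D1 (x ^ d)" using der_pow[OF D1, of x "d - 1"] d_Suc by simp
    also have "\<dots> = D2 (x ^ d)" using eq xdA by blast
    also have "\<dots> = of_nat d * x ^ (d - 1) * D2 x" using der_pow[OF D2, of x "d - 1"] d_Suc by simp
    finally show ?thesis using False d_nz by simp
  qed
  show ?thesis
  proof
    fix b
    let ?S = "{k. comp b k \<noteq> 0}"
    have b: "b = (\<Sum>k\<in>?S. comp b k)" using comp_sum fin_supp by blast
    have "D1 b = (\<Sum>k\<in>?S. D1 (comp b k))" using b der_sum[OF D1] by metis
    also have "\<dots> = (\<Sum>k\<in>?S. D2 (comp b k))" by (rule sum.cong) (auto intro: hom[OF comp_G])
    also have "\<dots> = D2 b" using b der_sum[OF D2] by metis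
    finally show "D1 b = D2 b" .
  qed
qed

lemma D_Mr_hom:
  assumes x: "x \<in> G i"
  shows "D x \<in> Mr d i"
proof (cases "x = 0")
  case True thus ?thesis using D_0 Mr_0 by simp
next
  case False
  define w where "w = of_nat d * x ^ (d - 1)"
  have wG: "w \<in> G (int (d - 1) * i)" unfolding w_def using Gmult[OF of_nat_G0 Gpow[OF x]] by simp
  have w0: "w \<noteq> 0" unfolding w_def using False d_nz by simp
  have "w * D x = \<delta> (x ^ d)" unfolding w_def using Dh_eq[OF x] D_hom[OF x] by simp
  moreover have "\<delta> (x ^ d) \<in> Mr d 0" using dA[OF A_hom[OF Gpow[OF x], of d]] A_Mr by simp
  ultimately have "w * D x \<in> Mr d 0" by simp
  hence "D x \<in> Mr d (0 - int (d - 1) * i)" by (rule Mr_shift[OF wG w0])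
  moreover have "int d dvd ((0 - int (d - 1) * i) - i)"
  proof -
    have "(0 - int (d - 1) * i) - i = - (int d * i)" using d_pos by (simp add: of_nat_diff algebra_simps)
    thus ?thesis by simp
  qed
  ultimately show ?thesis using Mr_cong by blast
qed

lemma D_Mr: "b \<in> Mr d r \<Longrightarrow> D b \<in> Mr d r"
proof -
  assume b: "b \<in> Mr d r"
  have "D b = (\<Sum>k\<in>{k. comp b k \<noteq> 0}. D (comp b k))" by (rule D_decomp)
  also have "\<dots> \<in> Mr d r"
  proof (rule Mr_sum[OF fin_supp])
    fix k assume "k \<in> {k. comp b k \<noteq> 0}"
    hence "int d dvd (k - r)" using b unfolding Mr_def by auto
    thus "D (comp b k) \<in> Mr d r" using D_Mr_hom[OF comp_G, of b k] Mr_cong by blast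
  qed
  finally show ?thesis .
qed

lemma Diter_Mr: "b \<in> Mr d r \<Longrightarrow> (D ^^ n) b \<in> Mr d r"
  by (induction n) (auto intro: D_Mr)

lemma D_iter_A: "a \<in> veronese G d \<Longrightarrow> (D ^^ n) a = (\<delta> ^^ n) a \<and> (\<delta> ^^ n) a \<in> veronese G d"
  by (induction n) (auto simp: D_ext dA)

end


context dsetup
begin

lemma LN_hom:
  assumes ln: "locally_nilpotent_on (veronese G d) \<delta>" and x: "x \<in> G i"
  shows "\<exists>n. (D ^^ n) x = 0"
proof (cases "x = 0")
  case True thus ?thesis by (intro exI[of _ 0]) simp
next
  case False
  have E: "derivation_on UNIV D" by (rule D_der)
  have LNA: "\<exists>n. (D ^^ n) a = 0" if aA: "a \<in> veronese G d" for a
  proof -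
    obtain n where "(\<delta> ^^ n) a = 0" using ln aA unfolding locally_nilpotent_on_def by blast
    thus ?thesis using D_iter_A[OF aA, of n] by auto
  qed
  have degex: "\<exists>m. deg_is D a m" if aA: "a \<in> veronese G d" and a0: "a \<noteq> 0" for a
  proof -
    obtain n where "(D ^^ n) a = 0" using LNA[OF aA] by blast
    thus ?thesis using deg_exists[OF a0] by blast
  qed
  define ys where "ys k = (D ^^ k) x" for k
  have ysS: "ys (Suc k) = D (ys k)" for k by (simp add: ys_def)
  have ysM: "ys k \<in> Mr d i" for k unfolding ys_def by (rule Diter_Mr[OF Mr_hom[OF x]])
  have powA: "ys k ^ d \<in> veronese G d" for k
  proof -
    have "ys k ^ d \<in> Mr d (int d * i)" by (rule Mr_pow[OF ysM])
    moreover have "Mr d (int d * i) = Mr d 0" by (rule Mr_cong) simp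
    ultimately show ?thesis using A_Mr by simp
  qed
  have uA: "ys k ^ (d - 1) * ys (Suc k) \<in> veronese G d" for k
  proof -
    have "ys k ^ (d - 1) * ys (Suc k) \<in> Mr d (int (d - 1) * i + i)" by (rule Mr_mult[OF Mr_pow[OF ysM] ysM])
    moreover have "Mr d (int (d - 1) * i + i) = Mr d 0"
    proof (rule Mr_cong)
      have "int (d - 1) * i + i - 0 = int d * i" using d_pos by (simp add: of_nat_diff algebra_simps)
      thus "int d dvd (int (d - 1) * i + i - 0)" by simp
    qed
    ultimately show ?thesis using A_Mr by simp
  qed
  have xdA: "x ^ d \<in> veronese G d" by (rule A_hom[OF Gpow[OF x]]) simp
  obtain N0 where N0: "deg_is D (x ^ d) N0" using degex[OF xdA] False by auto
  obtain e where e: "d = Suc e" using d_Suc by blast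
  have claim: "ys k \<noteq> 0 \<longrightarrow> deg_is D (ys k ^ d) (N0 - k * d) \<and> k * d \<le> N0" for k
  proof (induction k)
    case 0 show ?case using N0 by (simp add: ys_def)
  next
    case (Suc k)
    show ?case
    proof
      assume ysk1: "ys (Suc k) \<noteq> 0"
      have ysk: "ys k \<noteq> 0"
      proof
        assume "ys k = 0"
        hence "ys (Suc k) = 0" using ysS der_0[OF E] by simp
        thus False using ysk1 by simp
      qed
      define n where "n = N0 - k * d"
      have IH: "deg_is D (ys k ^ d) n" "k * d \<le> N0" using Suc.IH ysk unfolding n_def by auto
      define y where "y = ys k"
      define y' where "y' = ys (Suc k)"
      define u where "u = y ^ (d - 1) * y'"
      have Dyd: "D (y ^ d) = of_nat d * u"
        unfolding u_def y'_def ysS y_def using der_pow[OF E, of "ys k" "d - 1"] d_Suc by (simp add: ac_simps)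
      have uA': "u \<in> veronese G d" unfolding u_def y_def y'_def by (rule uA)
      have u0: "u \<noteq> 0" unfolding u_def y_def y'_def using ysk ysk1 by simp
      obtain m where m: "deg_is D u m" using degex[OF uA' u0] by blast
      have yd: "deg_is D (y ^ d) n" using IH(1) unfolding y_def .
      have "n \<noteq> 0"
      proof
        assume "n = 0"
        hence "D (y ^ d) = 0" using yd unfolding deg_is_def by simp
        hence "of_nat d * u = 0" using Dyd by simp
        thus False using u0 d_nz by simp
      qed
      then obtain n1 where n1: "n = Suc n1" by (cases n) auto
      have "deg_is D (D (y ^ d)) n1" using deg_D yd n1 by simp
      hence "deg_is D (of_nat d * u) n1" using Dyd by simp
      hence "deg_is D u n1" using deg_smul[OF E, of d u n1] d_pos by simp
      hence mn1: "m = n1" using deg_unique[OF E m] by simp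
      have y'A: "y' ^ d \<in> veronese G d" unfolding y'_def by (rule powA)
      have y'0: "y' ^ d \<noteq> 0" unfolding y'_def using ysk1 by simp
      obtain n' where n': "deg_is D (y' ^ d) n'" using degex[OF y'A y'0] by blast
      have d1: "deg_is D (u ^ d) (d * m)" using deg_pow[OF E m] .
      have "u ^ d = (y ^ d) ^ (d - 1) * y' ^ d"
        unfolding u_def by (simp add: power_mult_distrib power_mult[symmetric] mult.commute)
      moreover have "deg_is D ((y ^ d) ^ (d - 1) * y' ^ d) ((d - 1) * n + n')"
        by (rule deg_mult[OF E deg_pow[OF E yd] n'])
      ultimately have "deg_is D (u ^ d) ((d - 1) * n + n')" by simp
      hence eqn: "d * m = (d - 1) * n + n'" using deg_unique[OF E d1] by simp
      have nn': "n = d + n'" using eqn mn1 n1 e by (simp add: algebra_simps)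
      have "deg_is D (ys (Suc k) ^ d) (N0 - Suc k * d)"
      proof -
        have "N0 - Suc k * d = n'" using nn' IH(2) unfolding n_def by simp
        thus ?thesis using n' unfolding y'_def by simp
      qed
      moreover have "Suc k * d \<le> N0" using nn' IH(2) unfolding n_def by simp
      ultimately show "deg_is D (ys (Suc k) ^ d) (N0 - Suc k * d) \<and> Suc k * d \<le> N0" by blast
    qed
  qed
  have "ys (Suc N0) = 0"
  proof (rule ccontr)
    assume "ys (Suc N0) \<noteq> 0"
    hence "Suc N0 * d \<le> N0" using claim[of "Suc N0"] by blast
    thus False using d_pos by (simp add: e)
  qed
  thus ?thesis unfolding ys_def by blast
qed

lemma D_LN:
  assumes ln: "locally_nilpotent_on (veronese G d) \<delta>"
  shows "locally_nilpotent_on UNIV D"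
  unfolding locally_nilpotent_on_def
proof
  fix b :: 'a
  let ?S = "{k. comp b k \<noteq> 0}"
  have b: "b = (\<Sum>k\<in>?S. comp b k)" using comp_sum fin_supp by blast
  have "\<exists>n. (D ^^ n) (\<Sum>k\<in>?S. comp b k) = 0"
    by (rule LN_sum[OF D_der fin_supp]) (rule LN_hom[OF ln comp_G])
  thus "\<exists>n. (D ^^ n) b = 0" using b by simp
qed

end

theorem theorem3p2:
  fixes G :: "int \<Rightarrow> 'a::{idom, ring_char_0} set" and d :: nat
  assumes "Z_graded G"
    and "noetherian TYPE('a)"
    and "normal_domain TYPE('a)"
    and "e_deg G = 1"
    and "d \<in> Pi_star G"
    and "(of_nat d :: 'a) dvd 1"
  shows "(\<forall>\<delta>. derivation_on (veronese G d) \<delta> \<longrightarrow>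
            (\<exists>!D. derivation_on UNIV D \<and> (\<forall>x\<in>veronese G d. D x = \<delta> x)))
       \<and> (\<forall>\<delta>. derivation_on (veronese G d) \<delta> \<and> locally_nilpotent_on (veronese G d) \<delta> \<longrightarrow>
            (\<exists>!D. derivation_on UNIV D \<and> locally_nilpotent_on UNIV D
                  \<and> (\<forall>x\<in>veronese G d. D x = \<delta> x)))"
proof (intro conjI allI impI)
  fix \<delta> :: "'a \<Rightarrow> 'a"
  assume der: "derivation_on (veronese G d) \<delta>"
  interpret S: dsetup G d \<delta>
    by unfold_locales (use assms der in auto)
  show "\<exists>!D. derivation_on UNIV D \<and> (\<forall>x\<in>veronese G d. D x = \<delta> x)"
  proof (rule ex1I[of _ S.D])
    show "derivation_on UNIV S.D \<and> (\<forall>x\<in>veronese G d. S.D x = \<delta> x)" using S.D_der S.D_ext by blast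
  next
    fix D' assume h: "derivation_on UNIV D' \<and> (\<forall>x\<in>veronese G d. D' x = \<delta> x)"
    show "D' = S.D" by (rule S.ext_unique) (use h S.D_ext S.D_der in auto)
  qed
next
  fix \<delta> :: "'a \<Rightarrow> 'a"
  assume h0: "derivation_on (veronese G d) \<delta> \<and> locally_nilpotent_on (veronese G d) \<delta>"
  hence der: "derivation_on (veronese G d) \<delta>" and ln: "locally_nilpotent_on (veronese G d) \<delta>" by auto
  interpret S: dsetup G d \<delta>
    by unfold_locales (use assms der in auto)
  show "\<exists>!D. derivation_on UNIV D \<and> locally_nilpotent_on UNIV D \<and> (\<forall>x\<in>veronese G d. D x = \<delta> x)"
  proof (rule ex1I[of _ S.D])
    show "derivation_on UNIV S.D \<and> locally_nilpotent_on UNIV S.D \<and> (\<forall>x\<in>veronese G d. S.D x = \<delta> x)"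
      using S.D_der S.D_ext S.D_LN[OF ln] by blast
  next
    fix D' assume h: "derivation_on UNIV D' \<and> locally_nilpotent_on UNIV D' \<and> (\<forall>x\<in>veronese G d. D' x = \<delta> x)"
    show "D' = S.D" by (rule S.ext_unique) (use h S.D_ext S.D_der in auto)
  qed
qed


end
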